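(* Let $q\in\mathbb N$ with $0<b\le q(r-1)$. Then: (1) $r\ge e-q-1$. In particular: (a) if $r=e-1-q$, then $b=q(r-1)$, $q\le e-3$, and $e-r=k$, $\sum_{i\in B}r_i=e-1$, $r_i=r$ for every $i\in A$ (equivalently $b=(e-r-1)(r-1)$, equivalently $b=(k-1)(r-1)$); (b) if $r\ge e-q$, then $e-r\le k\le q$. (2) If moreover $(q-1)(r-1)<b\le q(r-1)$, then (c) $k-1\le q\le n-1$, and (d) $(q-k-1)(r-1)<\sum_{i\in A}(r-r_i)\le(q-k)(r-1)+e-1-k$.
   Context: Let $(R,\mathfrak m)$ be a one-dimensional local Noetherian domain with quotient field $K$, not regular, analytically irreducible (the integral closure $\overline R$ of $R$ in $K$ is a DVR and a finite $R$-module) and residually rational. Let $v$ be the valuation of $\overline R$ normalized so a uniformizer $t$ has value 1, $v(R)=\{v(a):a\in R\setminus\{0\}\}$, $\mathfrak C=(R:_K\overline R)=t^c\overline R$ with $c$ the least element of $v(R)$ with $c+\mathbb N\subseteq v(R)$, $\delta=\ell_R(\overline R/R)$, $r=\ell_R((R:_K\mathfrak m)/R)$, $b=(c-\delta)r-\delta$, $e$ the least positive element of $v(R)$, $n=c-\delta$. Write $v(R)=\{s_0=0<s_1<\cdots\}$ ($s_n=c$), $R_i=\{a\in R:v(a)\ge s_i\}$, $r_i=\ell_R((R:_KR_i)/(R:_KR_{i-1}))$. Let $i_0\in[1,n]$ with $s_{i_0-1}=\min\{y\in v(R):y\ge c-e\}$, $B=\{i_0,\dots,n\}$, $A=\{1,\dots,n\}\setminus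 B$. Let $x\in\mathfrak m$ with $v(x)=e$ and $k=\ell_R(R/(\mathfrak C+xR))$. *)

theory Defs
  imports Main "HOL-Library.Infinite_Set"
begin

text \<open>Everything lives inside a field K, modelled as a type 'a of class field.
 R is a subring of K; fractional ideals / R-submodules of K are subsets of K.\<close>

definition subring :: "'a::field set \<Rightarrow> bool" where
  "subring R \<longleftrightarrow> 0 \<in> R \<and> 1 \<in> R \<and> (\<forall>x\<in>R. \<forall>y\<in>R. x + y \<in> R \<and> x * y \<in> R \<and> - x \<in> R)"

definition submodule :: "'a::field set \<Rightarrow> 'a set \<Rightarrow> bool" where
  "submodule R M \<longleftrightarrow> 0 \<in> M \<and> (\<forall>x\<in>M. \<forall>y\<in>M. x + y \<in> M) \<and> (\<forall>a\<in>R. \<forall>x\<in>M. a * x \<in> M)"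

definition ideal_of :: "'a::field set \<Rightarrow> 'a set \<Rightarrow> bool" where
  "ideal_of R I \<longleftrightarrow> I \<subseteq> R \<and> submodule R I"

definition rspan :: "'a::field set \<Rightarrow> 'a set \<Rightarrow> 'a set" where
  "rspan R G = {(\<Sum>g\<in>G. f g * g) | f. \<forall>g\<in>G. f g \<in> R}"

definition noetherian :: "'a::field set \<Rightarrow> bool" where
  "noetherian R \<longleftrightarrow> (\<forall>I. ideal_of R I \<longrightarrow> (\<exists>G. finite G \<and> G \<subseteq> I \<and> I = rspan R G))"

definition prime_ideal_of :: "'a::field set \<Rightarrow> 'a set \<Rightarrow> bool" where
  "prime_ideal_of R P \<longleftrightarrow> ideal_of R P \<and> P \<noteq> R \<and> (\<forall>x\<in>R. \<forall>y\<in>R. x * y \<in> P \<longrightarrow> x \<in> P \<or> y \<in> P)"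

text \<open>The non-units of R; for a local ring this is the maximal ideal m.\<close>
definition nonunits :: "'a::field set \<Rightarrow> 'a set" where
  "nonunits R = {a \<in> R. \<forall>b\<in>R. a * b \<noteq> 1}"

definition local_ring :: "'a::field set \<Rightarrow> bool" where
  "local_ring R \<longleftrightarrow> ideal_of R (nonunits R)"

text \<open>Krull dimension one (for a local domain): m is nonzero and every nonzero prime is m.\<close>
definition dim_one :: "'a::field set \<Rightarrow> bool" where
  "dim_one R \<longleftrightarrow> nonunits R \<noteq> {0} \<and> (\<forall>P. prime_ideal_of R P \<and> P \<noteq> {0} \<longrightarrow> P = nonunits R)"

text \<open>A one-dimensional local Noetherian ring is regular iff its maximal ideal is principal.\<close>
definition regular_dim1 :: "'a::field set \<Rightarrow> bool" where
  "regular_dim1 R \<longleftrightarrow> (\<exists>t\<in>R. nonunits R = {t * a | a. a \<in> R})"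

text \<open>K (= UNIV) is the quotient field of R.\<close>
definition quotient_field_of :: "'a::field set \<Rightarrow> bool" where
  "quotient_field_of R \<longleftrightarrow> (\<forall>x. \<exists>a\<in>R. \<exists>b\<in>R. b \<noteq> 0 \<and> x = a / b)"

definition integral_closure :: "'a::field set \<Rightarrow> 'a set" where
  "integral_closure R = {x. \<exists>n f. (\<forall>i<n. f i \<in> R) \<and> x ^ n + (\<Sum>i<n. f i * x ^ i) = 0}"

text \<open>A discrete valuation of K, normalized so that some t has value 1 (values on nonzero elements).\<close>
definition discrete_valuation :: "('a::field \<Rightarrow> int) \<Rightarrow> bool" where
  "discrete_valuation v \<longleftrightarrow>
     (\<forall>x y. x \<noteq> 0 \<and> y \<noteq> 0 \<longrightarrow> v (x * y) = v x + v y) \<and>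
     (\<forall>x y. x \<noteq> 0 \<and> y \<noteq> 0 \<and> x + y \<noteq> 0 \<longrightarrow> v (x + y) \<ge> min (v x) (v y)) \<and>
     (\<exists>t. t \<noteq> 0 \<and> v t = 1)"

definition val_ring :: "('a::field \<Rightarrow> int) \<Rightarrow> 'a set" where
  "val_ring v = {x. x = 0 \<or> v x \<ge> 0}"

definition residually_rational :: "'a::field set \<Rightarrow> ('a \<Rightarrow> int) \<Rightarrow> bool" where
  "residually_rational R v \<longleftrightarrow> (\<forall>y\<in>val_ring v. \<exists>a\<in>R. y = a \<or> v (y - a) > 0)"

definition colon :: "'a::field set \<Rightarrow> 'a set \<Rightarrow> 'a set" where
  "colon A B = {x. \<forall>b\<in>B. x * b \<in> A}"

definition rlength :: "'a::field set \<Rightarrow> 'a set \<Rightarrow> 'a set \<Rightarrow> nat" where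
  "rlength R M N = (GREATEST n. \<exists>f. f 0 = N \<and> f n = M \<and> (\<forall>i\<le>n. submodule R (f i))
                        \<and> (\<forall>i<n. f i \<subset> f (Suc i)))"

definition value_set :: "'a::field set \<Rightarrow> ('a \<Rightarrow> int) \<Rightarrow> nat set" where
  "value_set R v = {nat (v a) | a. a \<in> R \<and> a \<noteq> 0}"

definition cond_exp :: "'a::field set \<Rightarrow> ('a \<Rightarrow> int) \<Rightarrow> nat" where
  "cond_exp R v = (LEAST c. c \<in> value_set R v \<and> (\<forall>j. c + j \<in> value_set R v))"

definition mult_e :: "'a::field set \<Rightarrow> ('a \<Rightarrow> int) \<Rightarrow> nat" where
  "mult_e R v = (LEAST y. y \<in> value_set R v \<and> 0 < y)"

text \<open>s_i: the i-th element (from s_0 = 0) of v(R).\<close>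
definition sval :: "'a::field set \<Rightarrow> ('a \<Rightarrow> int) \<Rightarrow> nat \<Rightarrow> nat" where
  "sval R v i = enumerate (value_set R v) i"

definition Rfilt :: "'a::field set \<Rightarrow> ('a \<Rightarrow> int) \<Rightarrow> nat \<Rightarrow> 'a set" where
  "Rfilt R v i = {a \<in> R. a = 0 \<or> v a \<ge> int (sval R v i)}"

definition rfilt :: "'a::field set \<Rightarrow> ('a \<Rightarrow> int) \<Rightarrow> nat \<Rightarrow> nat" where
  "rfilt R v i = rlength R (colon R (Rfilt R v i)) (colon R (Rfilt R v (i - 1)))"

end

theory Submission
  imports Defs
begin


locale setting =
  fixes R :: "'a::field set" and v :: "'a \<Rightarrow> int"
  assumes sub: "subring R"
    and qf: "quotient_field_of R"
    and loc: "local_ring R"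
    and dv: "discrete_valuation v"
    and ic: "integral_closure R = val_ring v"
    and fin: "\<exists>G. finite G \<and> G \<subseteq> val_ring v \<and> val_ring v = rspan R G"
    and rr: "residually_rational R v"
begin

lemma vmult: "x \<noteq> 0 \<Longrightarrow> y \<noteq> 0 \<Longrightarrow> v (x * y) = v x + v y"
  using dv unfolding discrete_valuation_def by blast
lemma vadd: "x \<noteq> 0 \<Longrightarrow> y \<noteq> 0 \<Longrightarrow> x + y \<noteq> 0 \<Longrightarrow> v (x + y) \<ge> min (v x) (v y)"
  using dv unfolding discrete_valuation_def by blast
lemma v1: "v 1 = 0" using vmult[of 1 1] by simp
lemma vm1: "v (-1) = 0" using vmult[of "-1" "-1"] v1 by simp
lemma vneg: "v (- x) = v x"
proof (cases "x = 0")
  case False thus ?thesis using vmult[of "-1" x] vm1 by simp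
qed simp
lemma vinv: "x \<noteq> 0 \<Longrightarrow> v (inverse x) = - v x"
  using vmult[of x "inverse x"] v1 by simp
lemma vdiv: "x \<noteq> 0 \<Longrightarrow> y \<noteq> 0 \<Longrightarrow> v (x / y) = v x - v y"
  by (simp add: divide_inverse vmult vinv)
lemma vstrict: assumes "x \<noteq> 0" "y \<noteq> 0" "v x < v y" shows "x + y \<noteq> 0" "v (x + y) = v x"
proof -
  show nz: "x + y \<noteq> 0"
  proof
    assume "x + y = 0" hence "y = - x" by (simp add: eq_neg_iff_add_eq_0 add.commute)
    thus False using assms(3) vneg[of x] by simp
  qed
  have "v (x + y) \<ge> v x" using vadd[OF assms(1,2) nz] assms by simp
  moreover have "v x \<ge> min (v (x + y)) (v (-y))" using vadd[OF nz, of "-y"] assms by simp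
  ultimately show "v (x + y) = v x" using vneg[of y] assms by linarith
qed
lemma vsub_strict: assumes "x \<noteq> 0" "y \<noteq> 0" "v x < v y" shows "x - y \<noteq> 0" "v (x - y) = v x"
  using vstrict[of x "-y"] assms vneg[of y] by auto

definition tt where "tt = (SOME t. t \<noteq> 0 \<and> v t = 1)"
lemma tt: "tt \<noteq> 0" "v tt = 1"
  using someI_ex[of "\<lambda>t. t \<noteq> 0 \<and> v t = 1"] dv unfolding discrete_valuation_def tt_def by auto
lemma tpow: "tt ^ m \<noteq> 0" "v (tt ^ m) = int m"
proof -
  show "tt ^ m \<noteq> 0" using tt by simp
  show "v (tt ^ m) = int m"
    by (induction m) (auto simp: v1 vmult tt)
qed

abbreviation Rb where "Rb \<equiv> val_ring v"
lemma Rb_iff: "z \<in> Rb \<longleftrightarrow> z = 0 \<or> v z \<ge> 0" unfolding val_ring_def by simp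

lemma Rsub: "0 \<in> R" "1 \<in> R" "a \<in> R \<Longrightarrow> b \<in> R \<Longrightarrow> a + b \<in> R"
   "a \<in> R \<Longrightarrow> b \<in> R \<Longrightarrow> a * b \<in> R" "a \<in> R \<Longrightarrow> - a \<in> R"
  using sub unfolding subring_def by auto
lemma Rdiff: "a \<in> R \<Longrightarrow> b \<in> R \<Longrightarrow> a - b \<in> R"
  using Rsub(3)[of a "-b"] Rsub(5)[of b] by simp
lemma Rsum: "finite A \<Longrightarrow> (\<And>i. i \<in> A \<Longrightarrow> f i \<in> R) \<Longrightarrow> sum f A \<in> R"
  by (induction A rule: finite_induct) (auto intro: Rsub)
lemma Rprod: "finite A \<Longrightarrow> (\<And>i. i \<in> A \<Longrightarrow> f i \<in> R) \<Longrightarrow> prod f A \<in> R"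
  by (induction A rule: finite_induct) (auto intro: Rsub)
lemma Rpow: "a \<in> R \<Longrightarrow> a ^ m \<in> R"
  by (induction m) (auto intro: Rsub)

lemma R_Rb: "R \<subseteq> Rb"
proof
  fix a assume a: "a \<in> R"
  have "a \<in> integral_closure R" unfolding integral_closure_def
    by (rule CollectI, rule exI[of _ 1], rule exI[of _ "\<lambda>_. -a"]) (use a Rsub in auto)
  thus "a \<in> Rb" using ic by simp
qed
lemma vR: "a \<in> R \<Longrightarrow> a \<noteq> 0 \<Longrightarrow> v a \<ge> 0" using R_Rb Rb_iff by blast
lemma Rb_mult: "a \<in> Rb \<Longrightarrow> b \<in> Rb \<Longrightarrow> a * b \<in> Rb"
  unfolding Rb_iff by (cases "a = 0 \<or> b = 0") (auto simp: vmult)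

lemma unit_v0: assumes a: "a \<in> R" "a \<noteq> 0" "v a = 0" shows "inverse a \<in> R"
proof -
  have "inverse a \<in> Rb" using a vinv Rb_iff by simp
  hence "inverse a \<in> integral_closure R" using ic by simp
  then obtain n f where f: "\<forall>i<n. f i \<in> R" "inverse a ^ n + (\<Sum>i<n. f i * inverse a ^ i) = 0"
    unfolding integral_closure_def by blast
  have n: "n \<noteq> 0" using f(2) by (cases n) auto
  then obtain m where m: "n = Suc m" by (cases n) auto
  have "a ^ m * (inverse a ^ n + (\<Sum>i<n. f i * inverse a ^ i)) = 0" using f by simp
  hence "a ^ m * inverse a ^ n + (\<Sum>i<n. a ^ m * (f i * inverse a ^ i)) = 0"
    by (simp add: distrib_left sum_distrib_left)
  moreover have "a ^ m * inverse a ^ n = inverse a" using m a(2)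
    by (simp add: power_inverse field_simps)
  moreover have "(\<Sum>i<n. a ^ m * (f i * inverse a ^ i)) = (\<Sum>i<n. f i * a ^ (m - i))"
  proof (rule sum.cong)
    fix i assume "i \<in> {..<n}"
    hence "i \<le> m" using m by simp
    hence "a ^ m = a ^ (m - i) * a ^ i" by (simp add: power_add[symmetric])
    thus "a ^ m * (f i * inverse a ^ i) = f i * a ^ (m - i)" using a(2)
      by (simp add: power_inverse field_simps)
  qed simp
  moreover have "(\<Sum>i<n. f i * a ^ (m - i)) \<in> R"
    by (rule Rsum) (use f(1) a(1) in \<open>auto intro: Rsub Rpow\<close>)
  ultimately have "inverse a = - (\<Sum>i<n. f i * a ^ (m - i))" by (simp add: eq_neg_iff_add_eq_0)
  thus ?thesis using \<open>(\<Sum>i<n. f i * a ^ (m - i)) \<in> R\<close> Rsub(5) by simp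
qed

lemma nonunits_iff: "nonunits R = {a \<in> R. a = 0 \<or> v a > 0}"
proof (intro set_eqI iffI)
  fix a assume a: "a \<in> nonunits R"
  hence aR: "a \<in> R" unfolding nonunits_def by simp
  show "a \<in> {a \<in> R. a = 0 \<or> v a > 0}"
  proof (rule ccontr)
    assume "a \<notin> {a \<in> R. a = 0 \<or> v a > 0}"
    hence "a \<noteq> 0" "v a = 0" using aR vR[OF aR] by auto
    hence "inverse a \<in> R" using unit_v0 aR by simp
    moreover have "a * inverse a = 1" using \<open>a \<noteq> 0\<close> by simp
    ultimately show False using a unfolding nonunits_def by blast
  qed
next
  fix a assume a: "a \<in> {a \<in> R. a = 0 \<or> v a > 0}"
  show "a \<in> nonunits R" unfolding nonunits_def
  proof (intro CollectI conjI ballI)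
    show "a \<in> R" using a by simp
    fix b assume b: "b \<in> R"
    show "a * b \<noteq> 1"
    proof
      assume ab: "a * b = 1"
      hence "a \<noteq> 0" "b \<noteq> 0" by auto
      hence "v a + v b = 0" using vmult ab v1 by metis
      moreover have "v b \<ge> 0" using vR b \<open>b \<noteq> 0\<close> by simp
      ultimately show False using a \<open>a \<noteq> 0\<close> by simp
    qed
  qed
qed


lemma submod_R: "submodule R R" unfolding submodule_def using Rsub by auto
lemma sm_add: "submodule R M \<Longrightarrow> x \<in> M \<Longrightarrow> y \<in> M \<Longrightarrow> x + y \<in> M"
  unfolding submodule_def by blast
lemma sm_mult: "submodule R M \<Longrightarrow> a \<in> R \<Longrightarrow> x \<in> M \<Longrightarrow> a * x \<in> M"
  unfolding submodule_def by blast
lemma sm_0: "submodule R M \<Longrightarrow> 0 \<in> M" unfolding submodule_def by blast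
lemma sm_neg: "submodule R M \<Longrightarrow> x \<in> M \<Longrightarrow> - x \<in> M"
  using sm_mult[of M "-1" x] Rsub by simp
lemma sm_diff: "submodule R M \<Longrightarrow> x \<in> M \<Longrightarrow> y \<in> M \<Longrightarrow> x - y \<in> M"
  using sm_add[of M x "-y"] sm_neg[of M y] by simp

lemma exists_d: "\<exists>d\<in>R. d \<noteq> 0 \<and> (\<forall>z\<in>Rb. d * z \<in> R)"
proof -
  obtain G where G: "finite G" "G \<subseteq> Rb" "Rb = rspan R G" using fin by blast
  have "\<forall>g. \<exists>p. fst p \<in> R \<and> snd p \<in> R \<and> snd p \<noteq> 0 \<and> fst p / snd p = g"
    using qf unfolding quotient_field_of_def by (metis fst_conv snd_conv)
  then obtain P where P: "\<And>g. fst (P g) \<in> R \<and> snd (P g) \<in> R \<and> snd (P g) \<noteq> 0 \<and> fst (P g) / snd (P g) = g"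
    by metis
  define d where "d = (\<Prod>g\<in>G. snd (P g))"
  have dR: "d \<in> R" unfolding d_def by (rule Rprod) (use G P in auto)
  have dnz: "d \<noteq> 0" unfolding d_def using G(1) P by simp
  have dg: "d * g \<in> R" if g: "g \<in> G" for g
  proof -
    have "d = snd (P g) * (\<Prod>h\<in>G-{g}. snd (P h))" unfolding d_def
      using G(1) g by (simp add: prod.remove)
    moreover have "snd (P g) * g = fst (P g)" using P[of g] by (metis nonzero_mult_div_cancel_left times_divide_eq_right)
    ultimately have "d * g = fst (P g) * (\<Prod>h\<in>G-{g}. snd (P h))"
      by (simp add: algebra_simps)
    moreover have "(\<Prod>h\<in>G-{g}. snd (P h)) \<in> R" by (rule Rprod) (use G P in auto)
    ultimately show ?thesis using P[of g] Rsub(4) by simp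
  qed
  have "\<forall>z\<in>Rb. d * z \<in> R"
  proof
    fix z assume "z \<in> Rb"
    then obtain f where f: "z = (\<Sum>g\<in>G. f g * g)" "\<forall>g\<in>G. f g \<in> R"
      using G(3) unfolding rspan_def by blast
    have "d * z = (\<Sum>g\<in>G. f g * (d * g))" unfolding f(1) sum_distrib_left
      by (simp add: mult.assoc mult.left_commute)
    also have "\<dots> \<in> R" by (rule Rsum) (use G f dg in \<open>auto intro: Rsub\<close>)
    finally show "d * z \<in> R" .
  qed
  thus ?thesis using dR dnz by blast
qed

lemma exists_D: "\<exists>D. \<forall>z. z \<noteq> 0 \<and> v z \<ge> int D \<longrightarrow> z \<in> R"
proof -
  obtain d where d: "d \<in> R" "d \<noteq> 0" "\<forall>z\<in>Rb. d * z \<in> R" using exists_d by blast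
  have "\<forall>z. z \<noteq> 0 \<and> v z \<ge> int (nat (v d)) \<longrightarrow> z \<in> R"
  proof safe
    fix z assume z: "z \<noteq> 0" "int (nat (v d)) \<le> v z"
    have "v (z / d) = v z - v d" using vdiv z d by simp
    moreover have "v d \<ge> 0" using vR d by simp
    ultimately have "v (z / d) \<ge> 0" using z by simp
    hence "z / d \<in> Rb" using Rb_iff by simp
    hence "d * (z / d) \<in> R" using d(3) by blast
    thus "z \<in> R" using d by simp
  qed
  thus ?thesis by blast
qed

definition Vs :: "'a set \<Rightarrow> nat set" where "Vs M = {nat (v a) | a. a \<in> M \<and> a \<noteq> 0}"
abbreviation S where "S \<equiv> value_set R v"
lemma S_Vs: "S = Vs R" unfolding value_set_def Vs_def by simp
abbreviation c where "c \<equiv> cond_exp R v"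
definition Cs where "Cs = {z. z = 0 \<or> v z \<ge> int c}"

lemma tpowR: "\<exists>D. \<forall>m\<ge>D. tt ^ m \<in> R"
proof -
  obtain D where D: "\<forall>z. z \<noteq> 0 \<and> v z \<ge> int D \<longrightarrow> z \<in> R" using exists_D by blast
  have "\<forall>m\<ge>D. tt ^ m \<in> R"
  proof safe
    fix m assume "D \<le> m"
    hence "v (tt ^ m) \<ge> int D" using tpow(2)[of m] by simp
    thus "tt ^ m \<in> R" using D tpow(1)[of m] by blast
  qed
  thus ?thesis by blast
qed

lemma c_props: "c \<in> S" "\<And>j. c + j \<in> S" "\<And>c'. c' \<in> S \<Longrightarrow> (\<forall>j. c' + j \<in> S) \<Longrightarrow> c \<le> c'"
proof -
  obtain D where D: "\<forall>m\<ge>D. tt ^ m \<in> R" using tpowR by blast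
  have "\<forall>j. D + j \<in> S" unfolding value_set_def
  proof
    fix j
    have "tt ^ (D + j) \<in> R" "tt ^ (D + j) \<noteq> 0" "nat (v (tt ^ (D + j))) = D + j"
      using D tpow[of "D+j"] by auto
    thus "D + j \<in> {nat (v a) |a. a \<in> R \<and> a \<noteq> 0}" by force
  qed
  hence ex: "D \<in> S \<and> (\<forall>j. D + j \<in> S)" using add_0_right[of D] by metis
  have "c \<in> S \<and> (\<forall>j. c + j \<in> S)"
    unfolding cond_exp_def by (rule LeastI[of "\<lambda>c. c \<in> S \<and> (\<forall>j. c + j \<in> S)", OF ex])
  thus "c \<in> S" "\<And>j. c + j \<in> S" by blast+
  show "\<And>c'. c' \<in> S \<Longrightarrow> (\<forall>j. c' + j \<in> S) \<Longrightarrow> c \<le> c'"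
    unfolding cond_exp_def by (rule Least_le) blast
qed

lemma approx:
  assumes N: "submodule R N" and M: "submodule R M" and MRb: "M \<subseteq> Rb"
    and T: "\<forall>z. z \<noteq> 0 \<and> v z \<ge> int T \<longrightarrow> z \<in> N"
    and val: "\<forall>z\<in>M. z \<noteq> 0 \<longrightarrow> (\<exists>a\<in>N \<inter> M. a \<noteq> 0 \<and> v a = v z)"
  shows "M \<subseteq> N"
proof -
  have "\<forall>z\<in>M. z \<noteq> 0 \<and> v z \<ge> int T - int j \<longrightarrow> z \<in> N" for j
  proof (induction j)
    case 0 thus ?case using T by simp
  next
    case (Suc j)
    show ?case
    proof safe
      fix z assume z: "z \<in> M" "z \<noteq> 0" "int T - int (Suc j) \<le> v z"
      show "z \<in> N"
      proof (cases "v z \<ge> int T - int j")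
        case True thus ?thesis using Suc z by blast
      next
        case False
        obtain a where a: "a \<in> N" "a \<in> M" "a \<noteq> 0" "v a = v z" using val z by blast
        define u where "u = z / a"
        have vu: "v u = 0" unfolding u_def using vdiv a z by simp
        hence "u \<in> Rb" using Rb_iff by simp
        then obtain l where l: "l \<in> R" "u = l \<or> v (u - l) > 0" using rr unfolding residually_rational_def by blast
        define w where "w = z - l * a"
        have law: "l * a \<in> N" "l * a \<in> M" using sm_mult N M l a by auto
        have wM: "w \<in> M" unfolding w_def using sm_diff[OF M z(1) law(2)] .
        have wa: "w = a * (u - l)" unfolding w_def u_def using a by (simp add: field_simps)
        have "w \<in> N"
        proof (cases "w = 0")
          case True thus ?thesis using sm_0 N by simp
        next
          case False
          hence "u - l \<noteq> 0" using wa by auto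
          hence "v (u - l) > 0" using l by auto
          hence "v w > v z" using wa vmult[of a "u - l"] a \<open>u - l \<noteq> 0\<close> by simp
          hence "v w \<ge> int T - int j" using z False by simp
          thus ?thesis using Suc wM False by blast
        qed
        hence "w + l * a \<in> N" using sm_add N law by blast
        thus ?thesis unfolding w_def by simp
      qed
    qed
  qed
  hence "\<forall>z\<in>M. z \<noteq> 0 \<and> v z \<ge> int T - int T \<longrightarrow> z \<in> N" by blast
  moreover have "\<forall>z\<in>M. z \<noteq> 0 \<longrightarrow> v z \<ge> 0" using MRb Rb_iff by blast
  ultimately show ?thesis using sm_0[OF N] by auto
qed

lemma submod_Cs: "submodule R Cs"
  unfolding submodule_def Cs_def
proof (intro conjI ballI)
  fix x y assume x: "x \<in> {z. z = 0 \<or> int c \<le> v z}" and y: "y \<in> {z. z = 0 \<or> int c \<le> v z}"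
  show "x + y \<in> {z. z = 0 \<or> int c \<le> v z}"
  proof (cases "x = 0 \<or> y = 0 \<or> x + y = 0")
    case False thus ?thesis using vadd[of x y] x y by force
  qed (use x y in auto)
next
  fix a x assume a: "a \<in> R" and x: "x \<in> {z. z = 0 \<or> int c \<le> v z}"
  show "a * x \<in> {z. z = 0 \<or> int c \<le> v z}"
  proof (cases "a = 0 \<or> x = 0")
    case False thus ?thesis using vmult[of a x] vR[OF a] x by auto
  qed auto
qed simp

lemma Cs_Rb: "Cs \<subseteq> Rb"
proof
  fix z assume "z \<in> Cs" thus "z \<in> Rb" unfolding Cs_def Rb_iff
    by (smt (verit) mem_Collect_eq of_nat_0_le_iff)
qed

lemma Cs_R: "Cs \<subseteq> R"
proof -
  obtain D where D: "\<forall>z. z \<noteq> 0 \<and> v z \<ge> int D \<longrightarrow> z \<in> R" using exists_D by blast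
  show ?thesis
  proof (rule approx[OF submod_R submod_Cs Cs_Rb D], safe)
    fix z assume z: "z \<in> Cs" "z \<noteq> 0"
    hence vz: "v z \<ge> int c" unfolding Cs_def by simp
    hence "nat (v z) = c + (nat (v z) - c)" by linarith
    hence "nat (v z) \<in> S" using c_props(2) by metis
    then obtain a where a: "a \<in> R" "a \<noteq> 0" "nat (v a) = nat (v z)" unfolding value_set_def by auto
    hence "v a = v z" using vR[of a] vz by linarith
    moreover have "a \<in> Cs" using vz \<open>v a = v z\<close> unfolding Cs_def by simp
    ultimately show "\<exists>a\<in>R \<inter> Cs. a \<noteq> 0 \<and> v a = v z" using a by blast
  qed
qed

lemma Rb_v: "a \<in> Rb \<Longrightarrow> a \<noteq> 0 \<Longrightarrow> int (nat (v a)) = v a" using Rb_iff by auto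

lemma Vs_eq:
  assumes N: "submodule R N" and M: "submodule R M" and CN: "Cs \<subseteq> N" and NM: "N \<subseteq> M"
    and MRb: "M \<subseteq> Rb" and V: "Vs M \<subseteq> Vs N"
  shows "M = N"
proof -
  have "M \<subseteq> N"
  proof (rule approx[OF N M MRb, of c])
    show "\<forall>z. z \<noteq> 0 \<and> int c \<le> v z \<longrightarrow> z \<in> N" using CN unfolding Cs_def by auto
    show "\<forall>z\<in>M. z \<noteq> 0 \<longrightarrow> (\<exists>a\<in>N \<inter> M. a \<noteq> 0 \<and> v a = v z)"
    proof safe
      fix z assume z: "z \<in> M" "z \<noteq> 0"
      hence "nat (v z) \<in> Vs N" using V unfolding Vs_def by blast
      then obtain a where a: "a \<in> N" "a \<noteq> 0" "nat (v a) = nat (v z)" unfolding Vs_def by auto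
      moreover have "a \<in> Rb" "z \<in> Rb" using a z NM MRb by auto
      ultimately have "v a = v z" using Rb_v[of a] Rb_v[of z] z by metis
      thus "\<exists>a\<in>N \<inter> M. a \<noteq> 0 \<and> v a = v z" using a NM by blast
    qed
  qed
  thus ?thesis using NM by blast
qed


definition Ge :: "nat \<Rightarrow> 'a set" where "Ge T = {z. z = 0 \<or> v z \<ge> int T}"
lemma Cs_Ge: "Cs = Ge c" unfolding Cs_def Ge_def by simp
lemma submod_Ge: "submodule R (Ge T)"
  unfolding submodule_def Ge_def
proof (intro conjI ballI)
  fix x y assume x: "x \<in> {z. z = 0 \<or> int T \<le> v z}" and y: "y \<in> {z. z = 0 \<or> int T \<le> v z}"
  show "x + y \<in> {z. z = 0 \<or> int T \<le> v z}"
  proof (cases "x = 0 \<or> y = 0 \<or> x + y = 0")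
    case False thus ?thesis using vadd[of x y] x y by force
  qed (use x y in auto)
next
  fix a x assume a: "a \<in> R" and x: "x \<in> {z. z = 0 \<or> int T \<le> v z}"
  show "a * x \<in> {z. z = 0 \<or> int T \<le> v z}"
  proof (cases "a = 0 \<or> x = 0")
    case False thus ?thesis using vmult[of a x] vR[OF a] x by auto
  qed auto
qed simp

lemma submod_Int: "submodule R A \<Longrightarrow> submodule R B \<Longrightarrow> submodule R (A \<inter> B)"
  unfolding submodule_def by blast

definition msum :: "'a set \<Rightarrow> 'a set \<Rightarrow> 'a set" where "msum A B = {p + q | p q. p \<in> A \<and> q \<in> B}"
lemma submod_msum: assumes A: "submodule R A" and B: "submodule R B" shows "submodule R (msum A B)"
  unfolding submodule_def
proof (intro conjI ballI)
  show "0 \<in> msum A B" unfolding msum_def using sm_0[OF A] sm_0[OF B] by force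
next
  fix x y assume "x \<in> msum A B" "y \<in> msum A B"
  then obtain p q p' q' where "x = p + q" "y = p' + q'" "p \<in> A" "q \<in> B" "p' \<in> A" "q' \<in> B"
    unfolding msum_def by blast
  moreover have "p + q + (p' + q') = (p + p') + (q + q')" by (simp add: algebra_simps)
  ultimately show "x + y \<in> msum A B" unfolding msum_def using sm_add A B by blast
next
  fix a x assume a: "a \<in> R" and "x \<in> msum A B"
  then obtain p q where "x = p + q" "p \<in> A" "q \<in> B" unfolding msum_def by blast
  moreover have "a * (p + q) = a * p + a * q" by (simp add: algebra_simps)
  ultimately show "a * x \<in> msum A B" unfolding msum_def using sm_mult A B a by blast
qed

definition good where "good M \<longleftrightarrow> submodule R M \<and> Cs \<subseteq> M \<and> M \<subseteq> Rb"

lemma Vs_mono: "N \<subseteq> M \<Longrightarrow> Vs N \<subseteq> Vs M" unfolding Vs_def by blast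

lemma Vs_tpow: "tt ^ m \<in> M \<Longrightarrow> m \<in> Vs M"
  unfolding Vs_def using tpow[of m] by (intro CollectI exI[of _ "tt ^ m"]) simp

lemma tpow_Cs: "m \<ge> c \<Longrightarrow> tt ^ m \<in> Cs" unfolding Cs_def using tpow[of m] by simp

lemma Vs_Cs: "Cs \<subseteq> N \<Longrightarrow> m \<ge> c \<Longrightarrow> m \<in> Vs N"
  using Vs_tpow tpow_Cs by blast

lemma Vs_diff_sub: "Cs \<subseteq> N \<Longrightarrow> Vs M - Vs N \<subseteq> {..<c}"
proof
  fix x assume "Cs \<subseteq> N" "x \<in> Vs M - Vs N"
  thus "x \<in> {..<c}" using Vs_Cs[of N x] by (metis DiffE lessThan_iff not_le)
qed
lemma Vs_diff_fin: "Cs \<subseteq> N \<Longrightarrow> finite (Vs M - Vs N)"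
  by (rule finite_subset[OF Vs_diff_sub]) simp_all

lemma chain_le:
  assumes N: "good N" and M: "submodule R M" "N \<subseteq> M" "M \<subseteq> Rb"
    and f: "f 0 = N" "f n = M" "\<forall>i\<le>n. submodule R (f i)" "\<forall>i<n. f i \<subset> f (Suc i)"
  shows "n \<le> card (Vs M - Vs N)"
proof -
  have low: "i \<le> n \<Longrightarrow> N \<subseteq> f i" for i
  proof (induction i)
    case (Suc i) thus ?case using f(4) by (meson Suc_le_lessD less_imp_le_nat psubset_imp_subset subset_trans)
  qed (use f in simp)
  have up: "j \<le> n \<longrightarrow> f (n - j) \<subseteq> M" for j
  proof (induction j)
    case 0 thus ?case using f by simp
  next
    case (Suc j)
    show ?case
    proof
      assume j: "Suc j \<le> n"
      hence "f (n - Suc j) \<subset> f (Suc (n - Suc j))" using f(4) by simp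
      moreover have "Suc (n - Suc j) = n - j" using j by simp
      ultimately show "f (n - Suc j) \<subseteq> M" using Suc j by auto
    qed
  qed
  have upi: "i \<le> n \<Longrightarrow> f i \<subseteq> M" for i using up[of "n - i"] by simp
  have fin: "finite (Vs X - Vs N)" for X using Vs_diff_fin N unfolding good_def by blast
  have "i \<le> n \<longrightarrow> i \<le> card (Vs (f i) - Vs N)" for i
  proof (induction i)
    case (Suc i)
    show ?case
    proof
      assume i: "Suc i \<le> n"
      have gi: "good (f i)" using low[of i] upi[of i] f(3) i N M unfolding good_def by auto
      have "i < n" using i by simp
      hence "f i \<subset> f (Suc i)" using f(4) by blast
      hence fne: "f (Suc i) \<noteq> f i" and fsub: "f i \<subseteq> f (Suc i)" by auto
      have "submodule R (f (Suc i))" using f(3) i by blast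
      moreover have "f (Suc i) \<subseteq> Rb" using upi[of "Suc i"] i M(3) by blast
      ultimately have "\<not> Vs (f (Suc i)) \<subseteq> Vs (f i)"
        using Vs_eq[of "f i" "f (Suc i)"] gi fne fsub unfolding good_def by blast
      hence "Vs (f i) - Vs N \<subset> Vs (f (Suc i)) - Vs N"
        using Vs_mono[OF \<open>f i \<subseteq> f (Suc i)\<close>] Vs_mono[OF low[of i]] i by auto
      hence "card (Vs (f i) - Vs N) < card (Vs (f (Suc i)) - Vs N)"
        using psubset_card_mono fin by blast
      thus "Suc i \<le> card (Vs (f (Suc i)) - Vs N)" using Suc i by simp
    qed
  qed simp
  thus ?thesis using f(2) by blast
qed

lemma chain_ex:
  "\<forall>N. good N \<longrightarrow> submodule R M \<longrightarrow> N \<subseteq> M \<longrightarrow> M \<subseteq> Rb \<longrightarrow> card (Vs M - Vs N) = m \<longrightarrow>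
     (\<exists>f. f 0 = N \<and> f m = M \<and> (\<forall>i\<le>m. submodule R (f i)) \<and> (\<forall>i<m. f i \<subset> f (Suc i)))"
proof (induction m)
  case 0
  show ?case
  proof safe
    fix N assume N: "good N" and M: "submodule R M" "N \<subseteq> M" "M \<subseteq> Rb" and cd: "card (Vs M - Vs N) = 0"
    have "Vs M \<subseteq> Vs N" using cd Vs_diff_fin[of N M] N unfolding good_def by auto
    hence "M = N" using Vs_eq[of N M] N M unfolding good_def by blast
    thus "\<exists>f. f 0 = N \<and> f 0 = M \<and> (\<forall>i\<le>0. submodule R (f i)) \<and> (\<forall>i<0. f i \<subset> f (Suc i))"
      using M by auto
  qed
next
  case (Suc m)
  show ?case
  proof safe
    fix N assume N: "good N" and M: "submodule R M" "N \<subseteq> M" "M \<subseteq> Rb" and cd: "card (Vs M - Vs N) = Suc m"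
    define D where "D = Vs M - Vs N"
    have finD: "finite D" unfolding D_def using Vs_diff_fin N unfolding good_def by blast
    have Dne: "D \<noteq> {}"
    proof
      assume "D = {}" hence "card D = 0" by simp
      thus False using cd unfolding D_def by simp
    qed
    define d where "d = Max D"
    have dD: "d \<in> D" unfolding d_def using finD Dne by simp
    have dmax: "x \<in> D \<Longrightarrow> x \<le> d" for x unfolding d_def using finD by simp
    define N' where "N' = msum N (M \<inter> Ge d)"
    have sN': "submodule R N'" unfolding N'_def
      using submod_msum submod_Int submod_Ge N M unfolding good_def by blast
    have NN': "N \<subseteq> N'" unfolding N'_def msum_def
    proof
      fix x assume "x \<in> N"
      moreover have "0 \<in> M \<inter> Ge d" using sm_0[OF M(1)] unfolding Ge_def by simp
      ultimately show "x \<in> {p + q |p q. p \<in> N \<and> q \<in> M \<inter> Ge d}"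
        by (intro CollectI exI[of _ x] exI[of _ 0]) simp
    qed
    have N'M: "N' \<subseteq> M" unfolding N'_def msum_def using M sm_add by blast
    have gN': "good N'" using sN' NN' N'M N M unfolding good_def by blast
    have VN': "Vs N' = insert d (Vs N)"
    proof
      show "insert d (Vs N) \<subseteq> Vs N'"
      proof -
        have "d \<in> Vs M" using dD unfolding D_def by simp
        then obtain a where a: "a \<in> M" "a \<noteq> 0" "nat (v a) = d" unfolding Vs_def by auto
        hence "v a = int d" using Rb_v[of a] M by auto
        hence "a \<in> M \<inter> Ge d" using a unfolding Ge_def by simp
        moreover have "0 \<in> N" using sm_0 N unfolding good_def by blast
        ultimately have "0 + a \<in> N'" unfolding N'_def msum_def by blast
        hence "a \<in> N'" by simp
        hence "d \<in> Vs N'" using a unfolding Vs_def by blast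
        thus ?thesis using Vs_mono[OF NN'] by blast
      qed
    next
      show "Vs N' \<subseteq> insert d (Vs N)"
      proof
        fix y assume "y \<in> Vs N'"
        then obtain w where w: "w \<in> N'" "w \<noteq> 0" "y = nat (v w)" unfolding Vs_def by auto
        obtain p q where pq: "w = p + q" "p \<in> N" "q \<in> M" "q \<in> Ge d" using w unfolding N'_def msum_def by blast
        have wM: "w \<in> M" using w N'M by blast
        have "w \<in> Rb" using wM M(3) by blast
        hence vw: "v w = int y" using Rb_v[of w] w(2,3) by simp
        show "y \<in> insert d (Vs N)"
        proof (cases "y \<ge> d")
          case True
          have "y \<in> Vs M" using w wM unfolding Vs_def by blast
          show ?thesis
          proof (cases "y \<in> Vs N")
            case False
            hence "y \<in> D" using \<open>y \<in> Vs M\<close> unfolding D_def by blast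
            hence "y = d" using dmax[of y] True by simp
            thus ?thesis by simp
          qed simp
        next
          case False
          show ?thesis
          proof (cases "q = 0")
            case True thus ?thesis using pq w unfolding Vs_def by auto
          next
            case False
            hence vq: "v q \<ge> int d" using pq unfolding Ge_def by simp
            hence lt: "v w < v q" using vw \<open>\<not> d \<le> y\<close> by simp
            have "p = w - q" using pq by simp
            hence "p \<noteq> 0" "v p = v w" using vsub_strict[OF w(2) False lt] by auto
            thus ?thesis using pq w unfolding Vs_def by auto
          qed
        qed
      qed
    qed
    have "d \<notin> Vs N" using dD unfolding D_def by simp
    hence "N \<noteq> N'" using VN' by auto
    hence NsN': "N \<subset> N'" using NN' by blast
    have "Vs M - Vs N' = D - {d}" unfolding VN' D_def by auto
    hence "card (Vs M - Vs N') = m" using cd dD finD unfolding D_def by simp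
    then obtain f where f: "f 0 = N'" "f m = M" "\<forall>i\<le>m. submodule R (f i)" "\<forall>i<m. f i \<subset> f (Suc i)"
      using Suc.IH[rule_format, OF gN' M(1) N'M M(3)] by blast
    define g where "g i = (if i = 0 then N else f (i - 1))" for i
    have "g 0 = N" "g (Suc m) = M" unfolding g_def using f by auto
    moreover have "\<forall>i\<le>Suc m. submodule R (g i)"
      unfolding g_def using f(3) N unfolding good_def by auto
    moreover have "\<forall>i<Suc m. g i \<subset> g (Suc i)"
    proof (intro allI impI)
      fix i assume i: "i < Suc m"
      have gS: "g (Suc i) = f i" unfolding g_def by simp
      show "g i \<subset> g (Suc i)"
      proof (cases i)
        case 0 thus ?thesis using gS f(1) NsN' unfolding g_def by simp
      next
        case (Suc j)
        hence "g i = f j" unfolding g_def by simp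
        moreover have "j < m" using Suc i by simp
        ultimately show ?thesis using gS f(4) Suc by simp
      qed
    qed
    ultimately show "\<exists>f. f 0 = N \<and> f (Suc m) = M \<and> (\<forall>i\<le>Suc m. submodule R (f i)) \<and> (\<forall>i<Suc m. f i \<subset> f (Suc i))"
      by blast
  qed
qed

lemma rlen:
  assumes N: "good N" and M: "submodule R M" "N \<subseteq> M" "M \<subseteq> Rb"
  shows "rlength R M N = card (Vs M - Vs N)"
  unfolding rlength_def
proof (rule Greatest_equality)
  show "\<exists>f. f 0 = N \<and> f (card (Vs M - Vs N)) = M \<and> (\<forall>i\<le>card (Vs M - Vs N). submodule R (f i)) \<and>
        (\<forall>i<card (Vs M - Vs N). f i \<subset> f (Suc i))"
    using chain_ex[rule_format, OF N M refl] .
  fix y assume "\<exists>f. f 0 = N \<and> f y = M \<and> (\<forall>i\<le>y. submodule R (f i)) \<and> (\<forall>i<y. f i \<subset> f (Suc i))"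
  then obtain f where "f 0 = N" "f y = M" "\<forall>i\<le>y. submodule R (f i)" "\<forall>i<y. f i \<subset> f (Suc i)" by blast
  thus "y \<le> card (Vs M - Vs N)" using chain_le[OF N M] by blast
qed


definition mideal where "mideal = nonunits R"

lemma submod_colon: "submodule R (colon R X)"
proof -
  have "0 \<in> colon R X" unfolding colon_def using Rsub(1) by simp
  moreover have "x + y \<in> colon R X" if "x \<in> colon R X" "y \<in> colon R X" for x y
    using that Rsub(3) unfolding colon_def by (simp add: distrib_right)
  moreover have "a * x \<in> colon R X" if "a \<in> R" "x \<in> colon R X" for a x
    using that Rsub(4) unfolding colon_def by (simp add: mult.assoc)
  ultimately show ?thesis unfolding submodule_def by blast
qed

lemma colon_anti: "X \<subseteq> Y \<Longrightarrow> colon R Y \<subseteq> colon R X" unfolding colon_def by blast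
lemma R_colon: "X \<subseteq> R \<Longrightarrow> R \<subseteq> colon R X" unfolding colon_def using Rsub(4) by blast
lemma colon_R: "colon R R = R"
proof
  show "colon R R \<subseteq> R" unfolding colon_def using Rsub(2) by force
qed (rule R_colon, simp)

lemma good_R: "good R" unfolding good_def using submod_R Cs_R R_Rb by blast

lemma Vs_Rb: "Vs Rb = UNIV"
proof -
  have "m \<in> Vs Rb" for m using Vs_tpow[of m Rb] tpow[of m] Rb_iff by simp
  thus ?thesis by blast
qed

lemma S_0: "0 \<in> S" unfolding S_Vs using Vs_tpow[of 0 R] Rsub(2) by simp
lemma S_ge_c: "m \<ge> c \<Longrightarrow> m \<in> S" using c_props(2)[of "m - c"] by simp
lemma S_inf: "infinite S"
proof
  assume "finite S"
  hence "S \<subseteq> {..Max S}" by auto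
  moreover have "Max S + c + 1 \<in> S" using S_ge_c by simp
  ultimately show False by auto
qed

end

lemma enum_below: fixes S :: "nat set" assumes "infinite S"
  shows "{y \<in> S. y < enumerate S i} = enumerate S ` {..<i}"
proof
  show "enumerate S ` {..<i} \<subseteq> {y \<in> S. y < enumerate S i}"
    using assms enumerate_in_set[OF assms] by auto
  show "{y \<in> S. y < enumerate S i} \<subseteq> enumerate S ` {..<i}"
  proof
    fix y assume y: "y \<in> {y \<in> S. y < enumerate S i}"
    then obtain j where j: "enumerate S j = y" using enumerate_Ex[OF assms] by blast
    hence "j < i" using y assms by auto
    thus "y \<in> enumerate S ` {..<i}" using j by blast
  qed
qed

lemma card_enum_below: fixes S :: "nat set" assumes "infinite S"
  shows "card {y \<in> S. y < enumerate S i} = i"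
  unfolding enum_below[OF assms]
  using inj_enumerate[OF assms] by (simp add: card_image inj_on_subset)

lemma enum_eq: fixes S :: "nat set" assumes "infinite S" "s \<in> S" "card {y \<in> S. y < s} = i"
  shows "enumerate S i = s"
proof -
  obtain j where j: "enumerate S j = s" using enumerate_Ex[OF assms(1,2)] by blast
  thus ?thesis using card_enum_below[OF assms(1), of j] assms(3) by simp
qed

lemma enum_between: fixes S :: "nat set" assumes "infinite S" "s \<in> S" "s > enumerate S i"
  shows "s \<ge> enumerate S (Suc i)"
proof -
  obtain j where j: "enumerate S j = s" using enumerate_Ex[OF assms(1,2)] by blast
  hence "j > i" using assms by auto
  hence "enumerate S (Suc i) \<le> enumerate S j" using enumerate_mono_le_iff[OF assms(1)] by simp
  thus ?thesis using j by simp
qed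

locale setting2 = setting +
  assumes cpos: "1 \<le> cond_exp R v"
begin

lemma c1_notS: "c - 1 \<notin> S"
proof
  assume a: "c - 1 \<in> S"
  have "\<forall>j. c - 1 + j \<in> S"
  proof
    fix j show "c - 1 + j \<in> S"
      by (cases j) (use a S_ge_c cpos in auto)
  qed
  hence "c \<le> c - 1" using c_props(3) a by blast
  thus False using cpos by simp
qed

lemma colon_Cs_sub: "colon R Cs \<subseteq> Rb"
proof
  fix z assume z: "z \<in> colon R Cs"
  show "z \<in> Rb"
  proof (rule ccontr)
    assume "z \<notin> Rb"
    hence zz: "z \<noteq> 0" "v z < 0" using Rb_iff by auto
    define m where "m = nat (int c - 1 - v z)"
    have mv: "int m = int c - 1 - v z" unfolding m_def using zz by simp
    have "tt ^ m \<in> Cs" unfolding Cs_def using tpow[of m] mv zz by simp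
    hence zR: "z * tt ^ m \<in> R" using z unfolding colon_def by blast
    have "z * tt ^ m \<noteq> 0" using zz tpow by simp
    moreover have "v (z * tt ^ m) = int c - 1" using vmult[of z "tt ^ m"] zz tpow mv by simp
    ultimately have "c - 1 \<in> S" using zR unfolding value_set_def
      by (intro CollectI exI[of _ "z * tt ^ m"]) simp
    thus False using c1_notS by simp
  qed
qed

lemma colon_Cs: "colon R Cs = Rb"
proof
  show "Rb \<subseteq> colon R Cs"
  proof
    fix z assume z: "z \<in> Rb"
    have "\<forall>b\<in>Cs. z * b \<in> R"
    proof
      fix b assume b: "b \<in> Cs"
      have "z * b \<in> Cs"
      proof (cases "z = 0 \<or> b = 0")
        case False thus ?thesis using b z vmult[of z b] unfolding Cs_def Rb_iff by auto
      qed (auto simp: Cs_def)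
      thus "z * b \<in> R" using Cs_R by blast
    qed
    thus "z \<in> colon R Cs" unfolding colon_def by blast
  qed
qed (rule colon_Cs_sub)

lemma conductor: "colon R Rb = Cs"
proof
  show "Cs \<subseteq> colon R Rb"
  proof
    fix z assume z: "z \<in> Cs"
    have "\<forall>b\<in>Rb. z * b \<in> R"
    proof
      fix b assume b: "b \<in> Rb"
      have "z * b \<in> Cs"
      proof (cases "z = 0 \<or> b = 0")
        case False thus ?thesis using b z vmult[of z b] unfolding Cs_def Rb_iff by auto
      qed (auto simp: Cs_def)
      thus "z * b \<in> R" using Cs_R by blast
    qed
    thus "z \<in> colon R Rb" unfolding colon_def by blast
  qed
  show "colon R Rb \<subseteq> Cs"
  proof
    fix z assume z: "z \<in> colon R Rb"
    show "z \<in> Cs"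
    proof (rule ccontr)
      assume "z \<notin> Cs"
      hence zz: "z \<noteq> 0" "v z < int c" unfolding Cs_def by auto
      define m where "m = nat (int c - 1 - v z)"
      have mv: "int m = int c - 1 - v z" unfolding m_def using zz by simp
      have "tt ^ m \<in> Rb" using tpow[of m] Rb_iff by simp
      hence zR: "z * tt ^ m \<in> R" using z unfolding colon_def by blast
      have "z * tt ^ m \<noteq> 0" using zz tpow by simp
      moreover have "v (z * tt ^ m) = int c - 1" using vmult[of z "tt ^ m"] zz tpow mv by simp
      ultimately have "c - 1 \<in> S" using zR cpos unfolding value_set_def
        by (intro CollectI exI[of _ "z * tt ^ m"]) simp
      thus False using c1_notS by simp
    qed
  qed
qed


abbreviation e where "e \<equiv> mult_e R v"
lemma e_props: "e \<in> S" "0 < e" "\<And>y. y \<in> S \<Longrightarrow> 0 < y \<Longrightarrow> e \<le> y"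
proof -
  have ex: "c \<in> S \<and> 0 < c" using c_props cpos by simp
  have "e \<in> S \<and> 0 < e" unfolding mult_e_def by (rule LeastI[of "\<lambda>y. y \<in> S \<and> 0 < y", OF ex])
  thus "e \<in> S" "0 < e" by auto
  show "\<And>y. y \<in> S \<Longrightarrow> 0 < y \<Longrightarrow> e \<le> y" unfolding mult_e_def by (rule Least_le) simp
qed
lemma e_le_c: "e \<le> c" using e_props(3) c_props(1) cpos by simp

abbreviation sv where "sv i \<equiv> sval R v i"
lemma sv_def': "sv i = enumerate S i" unfolding sval_def by simp
lemma sv_in: "sv i \<in> S" unfolding sv_def' using enumerate_in_set[OF S_inf] .
lemma sv_mono: "i < j \<Longrightarrow> sv i < sv j" unfolding sv_def' using S_inf by simp
lemma sv_mono_le: "i \<le> j \<Longrightarrow> sv i \<le> sv j" unfolding sv_def' using S_inf by simp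
lemma sv_between: "s \<in> S \<Longrightarrow> s > sv i \<Longrightarrow> s \<ge> sv (Suc i)"
  unfolding sv_def' using enum_between[OF S_inf] by blast
lemma sv_card: "card {y \<in> S. y < sv i} = i" unfolding sv_def' using card_enum_below[OF S_inf] .
lemma sv_eq: "s \<in> S \<Longrightarrow> card {y \<in> S. y < s} = i \<Longrightarrow> sv i = s"
  unfolding sv_def' using enum_eq[OF S_inf] by blast

lemma sv0: "sv 0 = 0" using sv_eq[of 0 0] S_0 by simp
lemma sv1: "sv 1 = e"
proof -
  have "{y \<in> S. y < e} = {0}" using e_props S_0 by force
  thus ?thesis using sv_eq[of e 1] e_props by simp
qed

definition nn where "nn = card {y \<in> S. y < c}"
lemma sv_nn: "sv nn = c" using sv_eq[of c nn] c_props unfolding nn_def by simp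
lemma sv_le_c: "i \<le> nn \<Longrightarrow> sv i \<le> c" using sv_mono_le sv_nn by metis
lemma sv_lt_c: "i < nn \<Longrightarrow> sv i < c" using sv_mono sv_nn by metis

lemma gaps: "UNIV - S = {..<c} - {y \<in> S. y < c}"
proof
  show "UNIV - S \<subseteq> {..<c} - {y \<in> S. y < c}"
  proof
    fix x assume "x \<in> UNIV - S"
    thus "x \<in> {..<c} - {y \<in> S. y < c}" using S_ge_c[of x] by (metis DiffD2 DiffI lessThan_iff mem_Collect_eq not_le)
  qed
qed blast
lemma card_gaps: "card (UNIV - S) = c - nn"
  unfolding gaps nn_def by (subst card_Diff_subset) auto
lemma nn_le_c: "nn \<le> c" unfolding nn_def
  using card_mono[of "{..<c}" "{y \<in> S. y < c}"] by auto

lemma Rf_eq: "Rfilt R v i = R \<inter> Ge (sv i)" unfolding Rfilt_def Ge_def by auto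
lemma Rf_anti: "i \<le> j \<Longrightarrow> Rfilt R v j \<subseteq> Rfilt R v i"
  unfolding Rf_eq Ge_def using sv_mono_le[of i j] by force
lemma Rf_R: "Rfilt R v i \<subseteq> R" unfolding Rf_eq by blast
lemma Rf0: "Rfilt R v 0 = R" unfolding Rf_eq Ge_def sv0 using vR by auto
lemma Rf_Cs: "i \<le> nn \<Longrightarrow> Cs \<subseteq> Rfilt R v i"
  unfolding Rf_eq Ge_def Cs_def using Cs_R sv_le_c[of i] unfolding Cs_def by force
lemma Rf_nn: "Rfilt R v nn = Cs"
  unfolding Rf_eq sv_nn Cs_Ge[symmetric] using Cs_R by blast
lemma Rf1: "Rfilt R v 1 = nonunits R"
proof -
  have "Rfilt R v 1 = {a \<in> R. a = 0 \<or> v a \<ge> int e}" unfolding Rf_eq sv1 Ge_def by auto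
  also have "\<dots> = {a \<in> R. a = 0 \<or> v a > 0}"
  proof (rule Collect_cong)
    fix a
    have h: "a \<in> R \<Longrightarrow> a \<noteq> 0 \<Longrightarrow> 0 < v a \<Longrightarrow> int e \<le> v a"
    proof -
      assume a: "a \<in> R" "a \<noteq> 0" "0 < v a"
      hence "nat (v a) \<in> S" unfolding value_set_def by blast
      hence "e \<le> nat (v a)" using e_props(3) a by simp
      thus "int e \<le> v a" using a by simp
    qed
    show "(a \<in> R \<and> (a = 0 \<or> int e \<le> v a)) = (a \<in> R \<and> (a = 0 \<or> 0 < v a))"
      using h e_props(2) by force
  qed
  finally show ?thesis using nonunits_iff by simp
qed

abbreviation Q where "Q i \<equiv> colon R (Rfilt R v i)"
lemma Q_mono: "i \<le> j \<Longrightarrow> Q i \<subseteq> Q j" using colon_anti Rf_anti by blast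
lemma R_Q: "R \<subseteq> Q i" using R_colon Rf_R by blast
lemma Q_Rb: "i \<le> nn \<Longrightarrow> Q i \<subseteq> Rb" using colon_anti[OF Rf_Cs] colon_Cs by blast
lemma good_Q: "i \<le> nn \<Longrightarrow> good (Q i)"
  unfolding good_def using submod_colon R_Q Cs_R Q_Rb by blast
lemma Q0: "Q 0 = R" unfolding Rf0 colon_R ..
lemma Qnn: "Q nn = Rb" unfolding Rf_nn colon_Cs ..
lemma submod_Rb: "submodule R Rb" using submod_colon colon_Cs by metis

lemma rfilt_card: "1 \<le> i \<Longrightarrow> i \<le> nn \<Longrightarrow> rfilt R v i = card (Vs (Q i) - Vs (Q (i - 1)))"
  unfolding rfilt_def by (rule rlen) (use good_Q submod_colon Q_mono Q_Rb in auto)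

lemma delta: "rlength R Rb R = c - nn"
  using rlen[OF good_R submod_Rb R_Rb] Vs_Rb card_gaps S_Vs by simp

lemma Cs_m: "Cs \<subseteq> nonunits R"
  unfolding nonunits_iff using Cs_R cpos unfolding Cs_def by force
lemma r_card: "rlength R (colon R (nonunits R)) R = card (Vs (colon R (nonunits R)) - S)"
proof -
  have "nonunits R \<subseteq> R" unfolding nonunits_def by blast
  hence "R \<subseteq> colon R (nonunits R)" by (rule R_colon)
  moreover have "colon R (nonunits R) \<subseteq> Rb" using colon_anti[OF Cs_m] colon_Cs by blast
  ultimately show ?thesis using rlen[OF good_R submod_colon] S_Vs by simp
qed

end

lemma telesc:
  fixes X :: "nat \<Rightarrow> 'b set"
  assumes mono: "\<And>i. X i \<subseteq> X (Suc i)" and fin: "\<And>i j. finite (X j - X i)" and ab: "a \<le> b"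
  shows "(\<Sum>i\<in>{a<..b}. card (X i - X (i - 1))) = card (X b - X a)"
  using ab
proof (induction b)
  case 0 thus ?case by simp
next
  case (Suc b)
  show ?case
  proof (cases "a = Suc b")
    case True thus ?thesis by simp
  next
    case False
    hence ab: "a \<le> b" using Suc by simp
    have Xab: "X a \<subseteq> X b" using ab
    proof (induction b)
      case (Suc b) thus ?case using mono[of b] by (cases "a = Suc b") auto
    qed simp
    have "{a<..Suc b} = insert (Suc b) {a<..b}" using ab by auto
    hence "(\<Sum>i\<in>{a<..Suc b}. card (X i - X (i - 1))) = card (X (Suc b) - X b) + card (X b - X a)"
      using Suc.IH[OF ab] by simp
    also have "\<dots> = card ((X (Suc b) - X b) \<union> (X b - X a))"
      by (rule card_Un_disjoint[symmetric]) (use fin in auto)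
    also have "(X (Suc b) - X b) \<union> (X b - X a) = X (Suc b) - X a" using mono[of b] Xab by blast
    finally show ?thesis .
  qed
qed

context setting2 begin

lemma Vs_Q_fin: "finite (Vs (Q j) - Vs (Q i))"
  using Vs_diff_fin[of "Q i" "Q j"] R_Q Cs_R by blast

lemma sum_rfilt: "a \<le> b \<Longrightarrow> b \<le> nn \<Longrightarrow> (\<Sum>i\<in>{a<..b}. rfilt R v i) = card (Vs (Q b) - Vs (Q a))"
proof -
  assume ab: "a \<le> b" "b \<le> nn"
  have "(\<Sum>i\<in>{a<..b}. rfilt R v i) = (\<Sum>i\<in>{a<..b}. card (Vs (Q i) - Vs (Q (i - 1))))"
    by (rule sum.cong) (use ab rfilt_card in auto)
  also have "\<dots> = card (Vs (Q b) - Vs (Q a))"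
    by (rule telesc) (use Vs_mono Q_mono Vs_Q_fin ab in auto)
  finally show ?thesis .
qed


lemma S_elem: "s \<in> S \<Longrightarrow> \<exists>a\<in>R. a \<noteq> 0 \<and> v a = int s"
  unfolding value_set_def using vR by force

lemma val_S: "a \<in> R \<Longrightarrow> a \<noteq> 0 \<Longrightarrow> nat (v a) \<in> S"
  unfolding value_set_def by blast

lemma S_add: "s \<in> S \<Longrightarrow> t \<in> S \<Longrightarrow> s + t \<in> S"
proof -
  assume "s \<in> S" "t \<in> S"
  then obtain a b where ab: "a \<in> R" "a \<noteq> 0" "v a = int s" "b \<in> R" "b \<noteq> 0" "v b = int t"
    using S_elem by blast
  hence "a * b \<in> R" "a * b \<noteq> 0" "v (a * b) = int (s + t)" using Rsub(4) vmult by auto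
  thus ?thesis using val_S[of "a * b"] by (metis nat_int of_nat_add)
qed

lemma rfilt_pos: assumes i: "1 \<le> i" "i \<le> nn" shows "rfilt R v i \<ge> 1"
proof -
  define s where "s = sv (i - 1)"
  have slt: "s < c" unfolding s_def using sv_lt_c i by simp
  have ssi: "s < sv i" unfolding s_def using sv_mono i by simp
  define z where "z = tt ^ (c - 1 - s)"
  have zQ: "z \<in> Q i" unfolding colon_def
  proof (intro CollectI ballI)
    fix a assume a: "a \<in> Rfilt R v i"
    show "z * a \<in> R"
    proof (cases "a = 0")
      case False
      hence "v a \<ge> int (sv i)" using a unfolding Rf_eq Ge_def by auto
      hence "v (z * a) \<ge> int c" unfolding z_def using vmult[of "tt ^ (c - 1 - s)" a] tpow tt(1) False slt ssi by simp
      thus ?thesis using Cs_R unfolding Cs_def by blast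
    qed (use Rsub in simp)
  qed
  obtain y where y: "y \<in> R" "y \<noteq> 0" "v y = int s" using S_elem sv_in unfolding s_def by blast
  have yR: "y \<in> Rfilt R v (i - 1)" using y unfolding Rf_eq Ge_def s_def by simp
  have "z * y \<notin> R"
  proof
    assume zy: "z * y \<in> R"
    have "z * y \<noteq> 0" unfolding z_def using tt(1) y by simp
    moreover have "v (z * y) = int (c - 1)" unfolding z_def using vmult[of "tt ^ (c - 1 - s)" y] tpow tt(1) y slt by simp
    ultimately have "c - 1 \<in> S" using val_S[OF zy] by simp
    thus False using c1_notS by simp
  qed
  hence "z \<notin> Q (i - 1)" using yR unfolding colon_def by blast
  hence ne: "Q i \<noteq> Q (i - 1)" using zQ by blast
  have "\<not> Vs (Q i) \<subseteq> Vs (Q (i - 1))"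
    using Vs_eq[of "Q (i - 1)" "Q i"] good_Q[of "i - 1"] submod_colon Q_mono[of "i - 1" i] Q_Rb[of i] i ne
    unfolding good_def by auto
  hence "Vs (Q i) - Vs (Q (i - 1)) \<noteq> {}" by blast
  hence "card (Vs (Q i) - Vs (Q (i - 1))) \<noteq> 0" using Vs_Q_fin by simp
  thus ?thesis using rfilt_card i by simp
qed

lemma decomp:
  assumes i: "1 \<le> i" "i \<le> nn" and y: "y \<in> R" "y \<noteq> 0" "v y = int (sv (i - 1))"
    and b: "b \<in> Rfilt R v (i - 1)"
  shows "\<exists>b'\<in>Rfilt R v i. \<exists>l\<in>R. b = b' + l * y"
proof (cases "b \<in> Rfilt R v i")
  case True thus ?thesis using Rsub(1) by force
next
  case False
  have bR: "b \<in> R" "b \<noteq> 0" "v b \<ge> int (sv (i - 1))" using b False unfolding Rf_eq Ge_def by auto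
  have "v b < int (sv i)" using False bR unfolding Rf_eq Ge_def by auto
  have "nat (v b) \<in> S" using val_S bR by simp
  have "v b = int (sv (i - 1))"
  proof (rule ccontr)
    assume "v b \<noteq> int (sv (i - 1))"
    hence "nat (v b) > sv (i - 1)" using bR by linarith
    hence "nat (v b) \<ge> sv (Suc (i - 1))" using sv_between \<open>nat (v b) \<in> S\<close> by blast
    hence "int (sv i) \<le> v b" using i vR[OF bR(1,2)] by (simp add: le_nat_iff)
    thus False using \<open>v b < int (sv i)\<close> by simp
  qed
  define u where "u = b / y"
  have vu: "v u = 0" unfolding u_def using vdiv bR y \<open>v b = int (sv (i - 1))\<close> by simp
  hence "u \<in> Rb" using Rb_iff by simp
  then obtain l where l: "l \<in> R" "u = l \<or> v (u - l) > 0" using rr unfolding residually_rational_def by blast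
  define b' where "b' = b - l * y"
  have b'R: "b' \<in> R" unfolding b'_def using Rdiff Rsub(4) bR l y by simp
  have b'y: "b' = y * (u - l)" unfolding b'_def u_def using y by (simp add: field_simps)
  have "b' \<in> Rfilt R v i"
  proof (cases "b' = 0")
    case True thus ?thesis using Rsub(1) unfolding Rf_eq Ge_def by simp
  next
    case False
    hence "u - l \<noteq> 0" using b'y by auto
    hence "v (u - l) > 0" using l by auto
    hence vb': "v b' > int (sv (i - 1))" using b'y vmult[of y "u - l"] y \<open>u - l \<noteq> 0\<close> by simp
    have "nat (v b') \<in> S" using val_S b'R False by simp
    moreover have "nat (v b') > sv (i - 1)" using vb' by linarith
    ultimately have "nat (v b') \<ge> sv (Suc (i - 1))" using sv_between by blast
    hence "v b' \<ge> int (sv i)" using i vb' by (simp add: le_nat_iff)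
    thus ?thesis using b'R unfolding Rf_eq Ge_def by simp
  qed
  moreover have "b = b' + l * y" unfolding b'_def by simp
  ultimately show ?thesis using l by blast
qed

definition ymul :: "'a \<Rightarrow> 'a set \<Rightarrow> 'a set" where "ymul y X = {y * z | z. z \<in> X}"
lemma submod_ymul: assumes X: "submodule R X" shows "submodule R (ymul y X)"
proof -
  have "0 \<in> ymul y X" unfolding ymul_def using sm_0[OF X] by force
  moreover have "p + q \<in> ymul y X" if hp: "p \<in> ymul y X" "q \<in> ymul y X" for p q
  proof -
    obtain z w where "p = y * z" "q = y * w" "z \<in> X" "w \<in> X" using hp unfolding ymul_def by blast
    moreover have "y * z + y * w = y * (z + w)" by (simp add: algebra_simps)
    ultimately show ?thesis unfolding ymul_def using sm_add[OF X] by blast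
  qed
  moreover have "a * p \<in> ymul y X" if hp: "a \<in> R" "p \<in> ymul y X" for a p
  proof -
    obtain z where "p = y * z" "z \<in> X" using hp unfolding ymul_def by blast
    moreover have "a * (y * z) = y * (a * z)" by (simp add: algebra_simps)
    ultimately show ?thesis unfolding ymul_def using sm_mult[OF X] hp(1) by blast
  qed
  ultimately show ?thesis unfolding submodule_def by blast
qed

lemma chain_mono: assumes "\<forall>i<n. f i \<subset> f (Suc i)" "i \<le> j" "j \<le> n" shows "f i \<subseteq> f j"
  using assms(2,3)
proof (induction j)
  case (Suc j) thus ?case using assms(1) by (cases "i = Suc j") (auto simp: less_eq_Suc_le)
qed simp

lemma rfilt_le_r: assumes i: "1 \<le> i" "i \<le> nn"
  shows "rfilt R v i \<le> rlength R (colon R (nonunits R)) R"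
proof -
  define mR where "mR = colon R (nonunits R)"
  obtain y where y: "y \<in> R" "y \<noteq> 0" "v y = int (sv (i - 1))" using S_elem sv_in by blast
  have yR: "y \<in> Rfilt R v (i - 1)" using y unfolding Rf_eq Ge_def by simp
  define m where "m = rfilt R v i"
  have mcard: "m = card (Vs (Q i) - Vs (Q (i - 1)))" unfolding m_def using rfilt_card i by simp
  have i1: "i - 1 \<le> nn" "i - 1 \<le> i" using i by auto
  have "\<exists>f. f 0 = Q (i - 1) \<and> f m = Q i \<and> (\<forall>j\<le>m. submodule R (f j)) \<and> (\<forall>j<m. f j \<subset> f (Suc j))"
    by (rule chain_ex[rule_format, OF good_Q[OF i1(1)] submod_colon Q_mono[OF i1(2)] Q_Rb[OF i(2)] mcard[symmetric]])
  then obtain f where f: "f 0 = Q (i - 1)" "f m = Q i" "\<forall>j\<le>m. submodule R (f j)" "\<forall>j<m. f j \<subset> f (Suc j)"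
    by blast
  define g where "g j = msum (ymul y (f j)) R" for j
  have fQ: "j \<le> m \<Longrightarrow> f j \<subseteq> Q i" for j using chain_mono[OF f(4), of j m] f(2) by simp
  have Qf: "j \<le> m \<Longrightarrow> Q (i - 1) \<subseteq> f j" for j using chain_mono[OF f(4), of 0 j] f(1) by simp
  have sg: "j \<le> m \<Longrightarrow> submodule R (g j)" for j unfolding g_def
    using submod_msum submod_ymul f(3) submod_R by blast
  have Rg: "R \<subseteq> g j" if "j \<le> m" for j
  proof
    fix a assume "a \<in> R"
    moreover have "0 \<in> ymul y (f j)" using sm_0 submod_ymul f(3) that by blast
    ultimately have "0 + a \<in> g j" unfolding g_def msum_def by blast
    thus "a \<in> g j" by simp
  qed
  have g0: "g 0 = R"
  proof
    show "g 0 \<subseteq> R"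
    proof
      fix w assume "w \<in> g 0"
      then obtain z a where "w = y * z + a" "z \<in> Q (i - 1)" "a \<in> R"
        unfolding g_def msum_def ymul_def f(1) by blast
      moreover have "z * y \<in> R" using \<open>z \<in> Q (i - 1)\<close> yR unfolding colon_def by blast
      ultimately show "w \<in> R" using Rsub(3) by (simp add: mult.commute)
    qed
  qed (use Rg in simp)
  have gmR: "g m \<subseteq> mR"
  proof
    fix w assume "w \<in> g m"
    then obtain z a where w: "w = y * z + a" "z \<in> Q i" "a \<in> R"
      unfolding g_def msum_def ymul_def f(2) by blast
    have "\<forall>mu\<in>nonunits R. w * mu \<in> R"
    proof
      fix mu assume mu: "mu \<in> nonunits R"
      hence muR: "mu \<in> R" "mu = 0 \<or> v mu > 0" using nonunits_iff by auto
      have "y * mu \<in> Rfilt R v i"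
      proof (cases "mu = 0")
        case True thus ?thesis using Rsub(1) unfolding Rf_eq Ge_def by simp
      next
        case False
        have ymR: "y * mu \<in> R" "y * mu \<noteq> 0" using Rsub(4) y muR False by auto
        have "v (y * mu) > int (sv (i - 1))" using vmult[of y mu] y muR False by simp
        hence "nat (v (y * mu)) > sv (i - 1)" by linarith
        hence "nat (v (y * mu)) \<ge> sv (Suc (i - 1))" using sv_between val_S[OF ymR] by blast
        hence "v (y * mu) \<ge> int (sv i)" using i \<open>v (y * mu) > int (sv (i - 1))\<close> by (simp add: le_nat_iff)
        thus ?thesis using ymR unfolding Rf_eq Ge_def by simp
      qed
      hence "z * (y * mu) \<in> R" using w(2) unfolding colon_def by blast
      moreover have "a * mu \<in> R" using Rsub(4) w(3) muR by simp
      moreover have "w * mu = z * (y * mu) + a * mu" unfolding w(1) by (simp add: algebra_simps)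
      ultimately show "w * mu \<in> R" using Rsub(3) by simp
    qed
    thus "w \<in> mR" unfolding mR_def colon_def by blast
  qed
  have mRRb: "mR \<subseteq> Rb" unfolding mR_def using colon_anti[OF Cs_m] colon_Cs by blast
  have strict: "\<forall>j<m. g j \<subset> g (Suc j)"
  proof (intro allI impI)
    fix j assume j: "j < m"
    have fs: "f j \<subset> f (Suc j)" using f(4) j by blast
    have sub: "g j \<subseteq> g (Suc j)" unfolding g_def msum_def ymul_def using fs by blast
    obtain z where z: "z \<in> f (Suc j)" "z \<notin> f j" using fs by blast
    have "y * z \<notin> g j"
    proof
      assume "y * z \<in> g j"
      then obtain w a where wa: "y * z = y * w + a" "w \<in> f j" "a \<in> R"
        unfolding g_def msum_def ymul_def by blast
      define d where "d = z - w"
      have "z \<in> Q i" "w \<in> Q i" using fQ[of "Suc j"] fQ[of j] z wa j by auto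
      hence "d \<in> Q i" unfolding d_def by (rule sm_diff[OF submod_colon])
      have yd: "d * y = a" unfolding d_def using wa(1) by (simp add: algebra_simps)
      have "d \<in> Q (i - 1)" unfolding colon_def
      proof (intro CollectI ballI)
        fix b assume "b \<in> Rfilt R v (i - 1)"
        then obtain b' l where bl: "b' \<in> Rfilt R v i" "l \<in> R" "b = b' + l * y" using decomp[OF i y] by blast
        have "d * b' \<in> R" using \<open>d \<in> Q i\<close> bl unfolding colon_def by blast
        moreover have "d * b = d * b' + l * (d * y)" unfolding bl(3) by (simp add: algebra_simps)
        ultimately show "d * b \<in> R" using Rsub(3,4) yd wa(3) bl(2) by simp
      qed
      moreover have "Q (i - 1) \<subseteq> f j" using Qf[of j] j by simp
      ultimately have "d \<in> f j" by blast
      hence "d + w \<in> f j" using sm_add f(3) wa(2) j by simp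
      thus False using z(2) unfolding d_def by simp
    qed
    moreover have "y * z \<in> g (Suc j)"
    proof -
      have "y * z \<in> ymul y (f (Suc j))" unfolding ymul_def using z by blast
      thus ?thesis unfolding g_def msum_def using Rsub(1) by force
    qed
    ultimately show "g j \<subset> g (Suc j)" using sub by blast
  qed
  have "m \<le> card (Vs (g m) - Vs R)"
    by (rule chain_le[OF good_R sg[OF order_refl] Rg[OF order_refl], of g]) (use gmR mRRb g0 sg strict in auto)
  also have "\<dots> \<le> card (Vs mR - Vs R)"
    by (rule card_mono) (use Vs_diff_fin[of R mR] Cs_R Vs_mono[OF gmR] in auto)
  also have "\<dots> = rlength R mR R" unfolding mR_def using r_card S_Vs by simp
  finally show ?thesis unfolding m_def mR_def .
qed


definition Ap where "Ap = {s \<in> S. s < c \<and> \<not> (e \<le> s \<and> s - e \<in> S)}"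

lemma k_card:
  assumes x: "x \<in> R" "x \<noteq> 0" "v x = int e"
  shows "rlength R R {u + x * a | u a. u \<in> colon R Rb \<and> a \<in> R} = card Ap"
proof -
  define K where "K = {u + x * a | u a. u \<in> colon R Rb \<and> a \<in> R}"
  have K: "K = msum Cs (ymul x R)" unfolding K_def msum_def ymul_def conductor by blast
  have sK: "submodule R K" unfolding K using submod_msum submod_Cs submod_ymul submod_R by blast
  have CK: "Cs \<subseteq> K"
  proof
    fix u assume "u \<in> Cs"
    hence "u + x * 0 \<in> K" unfolding K_def conductor using Rsub(1) by blast
    thus "u \<in> K" by simp
  qed
  have KR: "K \<subseteq> R" unfolding K_def conductor using Cs_R Rsub(3,4) x(1) by blast
  have gK: "good K" unfolding good_def using sK CK KR R_Rb by blast
  have len: "rlength R R K = card (S - Vs K)" using rlen[OF gK submod_R KR R_Rb] S_Vs by simp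
  have "S - Vs K = Ap"
  proof
    show "S - Vs K \<subseteq> Ap"
    proof
      fix s assume s: "s \<in> S - Vs K"
      have "s < c" using s Vs_Cs[OF CK, of s] by (metis DiffD2 not_le)
      moreover have "\<not> (e \<le> s \<and> s - e \<in> S)"
      proof
        assume h: "e \<le> s \<and> s - e \<in> S"
        then obtain a where a: "a \<in> R" "a \<noteq> 0" "v a = int (s - e)" using S_elem by blast
        have "0 + x * a \<in> K" unfolding K_def conductor using a(1) Cs_def by blast
        moreover have "x * a \<noteq> 0" "nat (v (x * a)) = s" using vmult[of x a] x a h by auto
        ultimately have "s \<in> Vs K" unfolding Vs_def by (metis (mono_tags, lifting) CollectI add_0)
        thus False using s by simp
      qed
      ultimately show "s \<in> Ap" using s unfolding Ap_def by simp
    qed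
  next
    show "Ap \<subseteq> S - Vs K"
    proof
      fix s assume s: "s \<in> Ap"
      have "s \<notin> Vs K"
      proof
        assume "s \<in> Vs K"
        then obtain w where w: "w \<in> K" "w \<noteq> 0" "s = nat (v w)" unfolding Vs_def by auto
        obtain u a where ua: "w = u + x * a" "u \<in> Cs" "a \<in> R" using w(1) unfolding K_def conductor by blast
        have wRb: "w \<in> Rb" using w(1) KR R_Rb by blast
        hence vw: "v w = int s" using Rb_v w by simp
        have "v (x * a) = v w \<and> a \<noteq> 0"
        proof (cases "u = 0")
          case True thus ?thesis using ua w by auto
        next
          case False
          hence "v u \<ge> int c" using ua unfolding Cs_def by simp
          hence lt: "v w < v u" using vw s unfolding Ap_def by simp
          have "x * a = w - u" using ua by simp
          thus ?thesis using vsub_strict[OF w(2) False lt] by auto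
        qed
        hence "v w = int e + v a" "a \<noteq> 0" using vmult[of x a] x by auto
        moreover have "v a \<ge> 0" using vR ua(3) \<open>a \<noteq> 0\<close> by simp
        ultimately have "e \<le> s" "s - e = nat (v a)" using vw by auto
        moreover have "nat (v a) \<in> S" using val_S ua(3) \<open>a \<noteq> 0\<close> by simp
        ultimately show False using s unfolding Ap_def by simp
      qed
      thus "s \<in> S - Vs K" using s unfolding Ap_def by simp
    qed
  qed
  thus ?thesis using len unfolding K_def by simp
qed

lemma card_Ap: "card Ap = nn - card {t \<in> S. t < c - e}"
proof -
  define W where "W = {s \<in> S. s < c \<and> e \<le> s \<and> s - e \<in> S}"
  have un: "{y \<in> S. y < c} = Ap \<union> W" unfolding Ap_def W_def by blast
  have dis: "Ap \<inter> W = {}" unfolding Ap_def W_def by blast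
  have W: "W = (\<lambda>t. t + e) ` {t \<in> S. t < c - e}"
  proof
    show "W \<subseteq> (\<lambda>t. t + e) ` {t \<in> S. t < c - e}"
    proof
      fix s assume s: "s \<in> W"
      hence "s = (s - e) + e" "s - e \<in> {t \<in> S. t < c - e}" unfolding W_def by auto
      thus "s \<in> (\<lambda>t. t + e) ` {t \<in> S. t < c - e}" by blast
    qed
    show "(\<lambda>t. t + e) ` {t \<in> S. t < c - e} \<subseteq> W"
      unfolding W_def using S_add e_props(1) e_le_c by auto
  qed
  have cW: "card W = card {t \<in> S. t < c - e}" unfolding W by (rule card_image) (simp add: inj_on_def)
  have "nn = card Ap + card W" unfolding nn_def un
    by (rule card_Un_disjoint) (use dis in \<open>auto simp: Ap_def W_def\<close>)
  thus ?thesis using cW by simp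
qed

lemma i0_card:
  assumes L: "sv j = (LEAST y. y \<in> S \<and> int y \<ge> int c - int e)"
  shows "card {t \<in> S. t < c - e} = j"
proof -
  define P where "P y \<longleftrightarrow> y \<in> S \<and> int y \<ge> int c - int e" for y
  have Pc: "P c" unfolding P_def using c_props by simp
  have PL: "P (sv j)" unfolding L using LeastI[of P, OF Pc] unfolding P_def by simp
  have Lmin: "\<And>y. P y \<Longrightarrow> sv j \<le> y" unfolding L using Least_le[of P] unfolding P_def by blast
  have "{t \<in> S. t < c - e} = {t \<in> S. t < sv j}"
  proof safe
    fix t assume "t \<in> S" "t < c - e"
    thus "t < sv j" using PL e_le_c unfolding P_def by linarith
  next
    fix t assume t: "t \<in> S" "t < sv j"
    hence "\<not> P t" using Lmin by (meson not_le)
    thus "t < c - e" using t e_le_c unfolding P_def by linarith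
  qed
  thus ?thesis using sv_card by simp
qed

lemma Bsum_le:
  assumes L: "sv j = (LEAST y. y \<in> S \<and> int y \<ge> int c - int e)" and j: "j \<le> nn"
  shows "card (UNIV - Vs (Q j)) \<le> e - 1"
proof -
  define P where "P y \<longleftrightarrow> y \<in> S \<and> int y \<ge> int c - int e" for y
  have Pc: "P c" unfolding P_def using c_props by simp
  have PL: "P (sv j)" unfolding L using LeastI[of P, OF Pc] unfolding P_def by simp
  have tQ: "tt ^ m \<in> Q j" if m: "m \<ge> e" for m
    unfolding colon_def
  proof (intro CollectI ballI)
    fix a assume a: "a \<in> Rfilt R v j"
    show "tt ^ m * a \<in> R"
    proof (cases "a = 0")
      case False
      hence "v a \<ge> int (sv j)" using a unfolding Rf_eq Ge_def by auto
      hence "v (tt ^ m * a) \<ge> int c" using vmult[of "tt ^ m" a] tpow tt(1) False PL m unfolding P_def by simp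
      thus ?thesis using Cs_R unfolding Cs_def by blast
    qed (use Rsub in simp)
  qed
  have "UNIV - Vs (Q j) \<subseteq> {1..<e}"
  proof
    fix m assume m: "m \<in> UNIV - Vs (Q j)"
    have "m \<noteq> 0"
    proof
      assume "m = 0" hence "m \<in> Vs R" using S_0 S_Vs by simp
      thus False using m Vs_mono[OF R_Q[of j]] by blast
    qed
    moreover have "\<not> m \<ge> e" using m tQ Vs_tpow by blast
    ultimately show "m \<in> {1..<e}" by simp
  qed
  hence "card (UNIV - Vs (Q j)) \<le> card {1..<e}" by (rule card_mono[rotated]) simp
  thus ?thesis by simp
qed

lemma r_ge:
  shows "e \<le> rlength R (colon R (nonunits R)) R + (nn - card {t \<in> S. t < c - e})"
proof -
  define mR where "mR = colon R (nonunits R)"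
  define G where "G = {c - e..<c} - S"
  have tmR: "tt ^ g \<in> mR" if g: "g \<ge> c - e" for g
    unfolding mR_def colon_def
  proof (intro CollectI ballI)
    fix mu assume mu: "mu \<in> nonunits R"
    hence muR: "mu \<in> R" "mu = 0 \<or> v mu > 0" using nonunits_iff by auto
    show "tt ^ g * mu \<in> R"
    proof (cases "mu = 0")
      case False
      hence "nat (v mu) \<in> S" "0 < nat (v mu)" using val_S muR by auto
      hence "e \<le> nat (v mu)" using e_props(3) by blast
      hence "v mu \<ge> int e" using muR False by (simp add: le_nat_iff)
      hence "v (tt ^ g * mu) \<ge> int c" using vmult[of "tt ^ g" mu] tpow tt(1) False g e_le_c by simp
      thus ?thesis using Cs_R unfolding Cs_def by blast
    qed (use Rsub in simp)
  qed
  have "G \<subseteq> Vs mR - S" unfolding G_def using tmR Vs_tpow by auto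
  moreover have "finite (Vs mR - S)" using Vs_diff_fin[of R mR] Cs_R S_Vs by simp
  ultimately have "card G \<le> card (Vs mR - S)" by (rule card_mono[rotated])
  also have "\<dots> = rlength R mR R" unfolding mR_def using r_card by simp
  finally have cG: "card G \<le> rlength R mR R" .
  define H where "H = {s \<in> S. c - e \<le> s \<and> s < c}"
  have "{c - e..<c} = G \<union> H" unfolding G_def H_def by auto
  moreover have "G \<inter> H = {}" unfolding G_def H_def by auto
  ultimately have "e = card G + card H" using card_Un_disjoint[of G H] e_le_c
    by (metis card_atLeastLessThan diff_diff_cancel finite_Un finite_atLeastLessThan)
  moreover have "nn = card {t \<in> S. t < c - e} + card H"
  proof -
    have "{y \<in> S. y < c} = {t \<in> S. t < c - e} \<union> H" unfolding H_def by auto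
    moreover have "{t \<in> S. t < c - e} \<inter> H = {}" unfolding H_def by auto
    ultimately show ?thesis unfolding nn_def by (simp add: card_Un_disjoint H_def)
  qed
  ultimately show ?thesis using cG unfolding mR_def by linarith
qed


end

lemma arith:
  fixes b q r e k nn SA SB :: int
  assumes bdef: "b = SA + k*r - SB" and SA: "SA \<ge> 0" and SB: "k \<le> SB" "SB \<le> e - 1"
    and er: "e \<le> r + k" and r2: "r \<ge> 2" and bn: "b \<le> (nn-1)*(r-1)" and bpos: "0 < b"
    and bq: "b \<le> q*(r-1)"
  shows "r \<ge> e - q - 1 \<and>
    (r = e-1-q \<longrightarrow> b = q*(r-1) \<and> q \<le> e-3 \<and> e - r = k \<and> SB = e-1 \<and> SA = 0
        \<and> b = (e-r-1)*(r-1) \<and> b = (k-1)*(r-1)) \<and>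
    (r \<ge> e - q \<longrightarrow> e - r \<le> k \<and> k \<le> q) \<and>
    ((q-1)*(r-1) < b \<longrightarrow> k - 1 \<le> q \<and> q \<le> nn - 1 \<and> (q-k-1)*(r-1) < SA \<and> SA \<le> (q-k)*(r-1) + e - 1 - k)"
proof -
  have kr: "k*r \<ge> (e-r)*r" using er r2 by (intro mult_right_mono) auto
  have lb: "b \<ge> (e-r-1)*(r-1) + SA + (k - (e - r))*r + (e - 1 - SB)"
    using bdef by (simp add: algebra_simps)
  have lb2: "b \<ge> (e-r-1)*(r-1)" using lb kr SA SB by (simp add: algebra_simps)
  have p1: "e - r - 1 \<le> q"
  proof -
    have "(e-r-1)*(r-1) \<le> q*(r-1)" using lb2 bq by simp
    thus ?thesis using r2 by (simp add: mult_le_cancel_right)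
  qed
  have p2: "r = e-1-q \<longrightarrow> b = q*(r-1) \<and> q \<le> e-3 \<and> e - r = k \<and> SB = e-1 \<and> SA = 0
        \<and> b = (e-r-1)*(r-1) \<and> b = (k-1)*(r-1)"
  proof
    assume req: "r = e-1-q"
    hence qe: "q = e - r - 1" by simp
    have "(k - (e - r))*r \<ge> 0" using er r2 by simp
    moreover have qq: "q*(r-1) = (e-r-1)*(r-1)" using qe by simp
    ultimately have z: "SA = 0" "(k - (e - r))*r = 0" "SB = e - 1" "b = q*(r-1)"
      using lb bq SA SB by linarith+
    hence "k = e - r" using r2 by simp
    thus "b = q*(r-1) \<and> q \<le> e-3 \<and> e - r = k \<and> SB = e-1 \<and> SA = 0
        \<and> b = (e-r-1)*(r-1) \<and> b = (k-1)*(r-1)" using z qe r2 by simp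
  qed
  have p3: "r \<ge> e - q \<longrightarrow> e - r \<le> k \<and> k \<le> q"
  proof
    assume rq: "r \<ge> e - q"
    have "k*r - (e - 1) \<le> q*(r-1)" using bdef SA SB bq by linarith
    hence "(k - q)*r \<le> e - 1 - q" by (simp add: algebra_simps)
    hence "(k - q)*r < 1 * r" using rq by simp
    hence "k - q < 1" using r2 by (simp add: mult_less_cancel_right)
    thus "e - r \<le> k \<and> k \<le> q" using er by simp
  qed
  have p4: "(q-1)*(r-1) < b \<longrightarrow> k - 1 \<le> q \<and> q \<le> nn - 1 \<and> (q-k-1)*(r-1) < SA \<and> SA \<le> (q-k)*(r-1) + e - 1 - k"
  proof
    assume qb: "(q-1)*(r-1) < b"
    have "k*r - (e - 1) \<le> b" using bdef SA SB by linarith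
    moreover have "(k-1)*(r-1) \<le> k*r - (e - 1)" using er by (simp add: algebra_simps)
    ultimately have "(k-1)*(r-1) \<le> q*(r-1)" using bq by linarith
    hence c1: "k - 1 \<le> q" using r2 by (simp add: mult_le_cancel_right)
    have "(q-1)*(r-1) < (nn-1)*(r-1)" using qb bn by linarith
    hence c2: "q \<le> nn - 1" using r2 by (simp add: mult_less_cancel_right)
    have "(q-k-1)*(r-1) = (q-1)*(r-1) - k*r + k" by (simp add: algebra_simps)
    hence c3: "(q-k-1)*(r-1) < SA" using qb bdef SB by linarith
    have "(q-k)*(r-1) + e - 1 - k = q*(r-1) - k*r + (e - 1)" by (simp add: algebra_simps)
    hence c4: "SA \<le> (q-k)*(r-1) + e - 1 - k" using bq bdef SB by linarith
    show "k - 1 \<le> q \<and> q \<le> nn - 1 \<and> (q-k-1)*(r-1) < SA \<and> SA \<le> (q-k)*(r-1) + e - 1 - k"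
      using c1 c2 c3 c4 by blast
  qed
  have p1': "r \<ge> e - q - 1" using p1 by simp
  show ?thesis using p1' p2 p3 p4 by blast
qed

context setting2 begin

lemma main:
  fixes q :: nat and i0 :: nat and x :: 'a
  defines "cc \<equiv> int (cond_exp R v)"
    and "dd \<equiv> int (rlength R (val_ring v) R)"
    and "rN \<equiv> int (rlength R (colon R (nonunits R)) R)"
    and "ee \<equiv> int (mult_e R v)"
    and "n0 \<equiv> int (cond_exp R v) - int (rlength R (val_ring v) R)"
    and "bb \<equiv> (int (cond_exp R v) - int (rlength R (val_ring v) R))
                * int (rlength R (colon R (nonunits R)) R) - int (rlength R (val_ring v) R)"
    and "BB \<equiv> {i0 .. nat (int (cond_exp R v) - int (rlength R (val_ring v) R))}"
    and "AA \<equiv> {1 .. nat (int (cond_exp R v) - int (rlength R (val_ring v) R))}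
                - {i0 .. nat (int (cond_exp R v) - int (rlength R (val_ring v) R))}"
    and "kk \<equiv> int (rlength R R ({u + x * a | u a. u \<in> colon R (val_ring v) \<and> a \<in> R}))"
  assumes i0: "1 \<le> int i0" "int i0 \<le> n0"
    and i0def: "sval R v (i0 - 1) = (LEAST y. y \<in> value_set R v \<and> int y \<ge> cc - ee)"
    and xm: "x \<in> nonunits R" and xv: "x \<noteq> 0" "v x = ee"
    and bpos: "0 < bb" and bq: "bb \<le> int q * (rN - 1)"
  shows
   "rN \<ge> ee - int q - 1
    \<and> (rN = ee - 1 - int q \<longrightarrow>
         bb = int q * (rN - 1) \<and> int q \<le> ee - 3 \<and> ee - rN = kk
         \<and> (\<Sum>i\<in>BB. int (rfilt R v i)) = ee - 1 \<and> (\<forall>i\<in>AA. int (rfilt R v i) = rN)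
         \<and> bb = (ee - rN - 1) * (rN - 1) \<and> bb = (kk - 1) * (rN - 1))
    \<and> (rN \<ge> ee - int q \<longrightarrow> ee - rN \<le> kk \<and> kk \<le> int q)
    \<and> ((int q - 1) * (rN - 1) < bb \<longrightarrow>
         kk - 1 \<le> int q \<and> int q \<le> n0 - 1
         \<and> (int q - kk - 1) * (rN - 1) < (\<Sum>i\<in>AA. rN - int (rfilt R v i))
         \<and> (\<Sum>i\<in>AA. rN - int (rfilt R v i)) \<le> (int q - kk) * (rN - 1) + ee - 1 - kk)"
proof -
  have dl: "rlength R Rb R = c - nn" using delta .
  have n0: "n0 = int nn" unfolding n0_def dl using nn_le_c by simp
  have natn: "nat (int (cond_exp R v) - int (rlength R (val_ring v) R)) = nn" using n0 unfolding n0_def by simp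
  have BB: "BB = {i0..nn}" unfolding BB_def natn ..
  have AA: "AA = {1..nn} - {i0..nn}" unfolding AA_def natn ..
  have i0n: "1 \<le> i0" "i0 \<le> nn" using i0 n0 by auto
  have xR: "x \<in> R" using xm unfolding nonunits_def by simp
  have L: "sv (i0 - 1) = (LEAST y. y \<in> S \<and> int y \<ge> int c - int e)" using i0def unfolding cc_def ee_def .
  have ci0: "card {t \<in> S. t < c - e} = i0 - 1" using i0_card[OF L] .
  have kk: "kk = int (nn - (i0 - 1))" unfolding kk_def using k_card[OF xR xv(1) xv(2)[unfolded ee_def]] card_Ap ci0 by simp
  define rf where "rf i = int (rfilt R v i)" for i
  define r where "r = rlength R (colon R (nonunits R)) R"
  have rN: "rN = int r" unfolding rN_def r_def ..
  have rf1: "\<And>i. i \<in> {1..nn} \<Longrightarrow> 1 \<le> rf i" unfolding rf_def using rfilt_pos by fastforce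
  have rfr: "\<And>i. i \<in> {1..nn} \<Longrightarrow> rf i \<le> rN" unfolding rf_def rN r_def using rfilt_le_r by fastforce
  have rf_one: "rf 1 = rN" unfolding rf_def rN r_def rfilt_def using Rf1 Rf0 colon_R by simp
  have sumall: "(\<Sum>i\<in>{1..nn}. rf i) = int (c - nn)"
  proof -
    have "(\<Sum>i\<in>{0<..nn}. rfilt R v i) = card (Vs (Q nn) - Vs (Q 0))" using sum_rfilt[of 0 nn] by simp
    also have "\<dots> = c - nn" unfolding Qnn Q0 Vs_Rb S_Vs[symmetric] using card_gaps .
    finally have "(\<Sum>i\<in>{0<..nn}. rfilt R v i) = c - nn" .
    moreover have "{0<..nn} = {1..nn}" by auto
    ultimately show ?thesis unfolding rf_def by (metis of_nat_sum)
  qed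
  have sumB: "(\<Sum>i\<in>{i0..nn}. rf i) \<le> ee - 1"
  proof -
    have "(\<Sum>i\<in>{i0-1<..nn}. rfilt R v i) = card (Vs (Q nn) - Vs (Q (i0 - 1)))" using sum_rfilt[of "i0 - 1" nn] i0n by simp
    also have "\<dots> \<le> e - 1" unfolding Qnn Vs_Rb using Bsum_le[OF L] i0n by simp
    finally have "(\<Sum>i\<in>{i0-1<..nn}. rfilt R v i) \<le> e - 1" .
    moreover have "{i0-1<..nn} = {i0..nn}" using i0n by auto
    ultimately have "(\<Sum>i\<in>{i0..nn}. rfilt R v i) \<le> e - 1" by simp
    hence "(\<Sum>i\<in>{i0..nn}. rf i) \<le> int (e - 1)" unfolding rf_def by (metis of_nat_le_iff of_nat_sum)
    thus ?thesis unfolding ee_def using e_props(2) by simp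
  qed
  have cardB: "card {i0..nn} = nn - (i0 - 1)" using i0n by simp
  have sumB1: "(\<Sum>i\<in>{i0..nn}. rf i) \<ge> kk"
  proof -
    have "(\<Sum>i\<in>{i0..nn}. rf i) \<ge> (\<Sum>i\<in>{i0..nn}. 1)" by (rule sum_mono) (use rf1 i0n in auto)
    thus ?thesis unfolding kk cardB[symmetric] by simp
  qed
  have er: "ee \<le> rN + kk" using r_ge unfolding ci0 ee_def rN r_def kk by linarith
  define SA where "SA = (\<Sum>i\<in>AA. rN - rf i)"
  define SB where "SB = (\<Sum>i\<in>{i0..nn}. rf i)"
  have SA0: "SA \<ge> 0" unfolding SA_def AA by (rule sum_nonneg) (use rfr in auto)
  have un: "{1..nn} = AA \<union> {i0..nn}" unfolding AA using i0n by auto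
  have bsum: "bb = (\<Sum>i\<in>{1..nn}. rN - rf i)"
  proof -
    have "(\<Sum>i\<in>{1..nn}. rN - rf i) = int nn * rN - int (c - nn)"
      using sumall by (simp add: sum_subtractf)
    thus ?thesis unfolding bb_def using n0[unfolded n0_def] dl rN r_def by simp
  qed
  have bSA: "bb = SA + kk * rN - SB"
  proof -
    have "(\<Sum>i\<in>{1..nn}. rN - rf i) = SA + (\<Sum>i\<in>{i0..nn}. rN - rf i)"
      unfolding SA_def un by (rule sum.union_disjoint) (auto simp: AA)
    also have "(\<Sum>i\<in>{i0..nn}. rN - rf i) = kk * rN - SB"
      unfolding SB_def kk cardB[symmetric] by (simp add: sum_subtractf)
    finally show ?thesis using bsum by simp
  qed
  have bn: "bb \<le> (int nn - 1) * (rN - 1)"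
  proof -
    have "{1..nn} = insert 1 {2..nn}" using i0n by auto
    hence "(\<Sum>i\<in>{1..nn}. rN - rf i) = (rN - rf 1) + (\<Sum>i\<in>{2..nn}. rN - rf i)" by simp
    also have "(\<Sum>i\<in>{2..nn}. rN - rf i) \<le> (\<Sum>i\<in>{2..nn}. rN - 1)"
    proof (rule sum_mono)
      fix i assume "i \<in> {2..nn}" hence "1 \<le> rf i" using rf1[of i] by simp
      thus "rN - rf i \<le> rN - 1" by simp
    qed
    finally show ?thesis using bsum rf_one i0n by (simp add: of_nat_diff)
  qed
  have r2: "rN \<ge> 2"
  proof (rule ccontr)
    assume "\<not> rN \<ge> 2"
    hence "(\<Sum>i\<in>{1..nn}. rN - rf i) \<le> (\<Sum>i\<in>{1..nn}. 0)" by (intro sum_mono) (use rf1 in force)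
    thus False using bsum bpos by simp
  qed
  note ar = arith[OF bSA SA0 sumB1[folded SB_def] sumB[folded SB_def] er r2 bn bpos bq]
  have Aall: "SA = 0 \<Longrightarrow> \<forall>i\<in>AA. int (rfilt R v i) = rN"
  proof -
    assume "SA = 0"
    hence "\<forall>i\<in>AA. rN - rf i = 0" unfolding SA_def
      by (subst (asm) sum_nonneg_eq_0_iff) (use rfr in \<open>auto simp: AA\<close>)
    thus ?thesis unfolding rf_def by simp
  qed
  have SBe: "(\<Sum>i\<in>BB. int (rfilt R v i)) = SB" unfolding SB_def BB rf_def ..
  have SAe: "(\<Sum>i\<in>AA. rN - int (rfilt R v i)) = SA" unfolding SA_def rf_def ..
  show ?thesis unfolding SBe SAe n0 using ar Aall by blast
qed

end

theorem proposition2p5: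
  fixes R :: "'a::field set" and v :: "'a \<Rightarrow> int" and q :: nat and i0 :: nat and x :: 'a
  assumes sub: "subring R"
    and qf: "quotient_field_of R"
    and noeth: "noetherian R"
    and loc: "local_ring R"
    and dim1: "dim_one R"
    and not_reg: "\<not> regular_dim1 R"
    and dv: "discrete_valuation v"
    and ic: "integral_closure R = val_ring v"
    and fin: "\<exists>G. finite G \<and> G \<subseteq> val_ring v \<and> val_ring v = rspan R G"
    and rr: "residually_rational R v"
  defines "c \<equiv> int (cond_exp R v)"
    and "\<delta> \<equiv> int (rlength R (val_ring v) R)"
    and "r \<equiv> int (rlength R (colon R (nonunits R)) R)"
    and "e \<equiv> int (mult_e R v)"
    and "n \<equiv> int (cond_exp R v) - int (rlength R (val_ring v) R)"
    and "b \<equiv> (int (cond_exp R v) - int (rlength R (val_ring v) R))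
                * int (rlength R (colon R (nonunits R)) R) - int (rlength R (val_ring v) R)"
    and "B \<equiv> {i0 .. nat (int (cond_exp R v) - int (rlength R (val_ring v) R))}"
    and "A \<equiv> {1 .. nat (int (cond_exp R v) - int (rlength R (val_ring v) R))}
                - {i0 .. nat (int (cond_exp R v) - int (rlength R (val_ring v) R))}"
    and "k \<equiv> int (rlength R R ({u + x * a | u a. u \<in> colon R (val_ring v) \<and> a \<in> R}))"
  assumes i0: "1 \<le> int i0" "int i0 \<le> n"
    and i0def: "sval R v (i0 - 1) = (LEAST y. y \<in> value_set R v \<and> int y \<ge> c - e)"
    and xm: "x \<in> nonunits R" and xv: "x \<noteq> 0" "v x = e"
    and bpos: "0 < b" and bq: "b \<le> int q * (r - 1)"
  shows
   "r \<ge> e - int q - 1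
    \<and> (r = e - 1 - int q \<longrightarrow>
         b = int q * (r - 1) \<and> int q \<le> e - 3 \<and> e - r = k
         \<and> (\<Sum>i\<in>B. int (rfilt R v i)) = e - 1 \<and> (\<forall>i\<in>A. int (rfilt R v i) = r)
         \<and> b = (e - r - 1) * (r - 1) \<and> b = (k - 1) * (r - 1))
    \<and> (r \<ge> e - int q \<longrightarrow> e - r \<le> k \<and> k \<le> int q)
    \<and> ((int q - 1) * (r - 1) < b \<longrightarrow>
         k - 1 \<le> int q \<and> int q \<le> n - 1
         \<and> (int q - k - 1) * (r - 1) < (\<Sum>i\<in>A. r - int (rfilt R v i))
         \<and> (\<Sum>i\<in>A. r - int (rfilt R v i)) \<le> (int q - k) * (r - 1) + e - 1 - k)"
proof -
  have cpos: "1 \<le> cond_exp R v" using i0 unfolding n_def by linarith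
  have st: "setting2 R v"
    unfolding setting2_def setting_def setting2_axioms_def using sub qf loc dv ic fin rr cpos by blast
  show ?thesis
    unfolding c_def \<delta>_def r_def e_def n_def b_def B_def A_def k_def
    by (rule setting2.main[OF st i0[unfolded n_def] i0def[unfolded c_def e_def] xm xv[unfolded e_def]
          bpos[unfolded b_def] bq[unfolded r_def b_def]])
qed

end
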